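(* Let $f \in \mathcal{C}_{2\pi}$, let $A_n[f]$ be the Toeplitz matrix generated by $f$ and $c_n[f]$ the optimal circulant preconditioner for $A_n[f]$. For every $\epsilon>0$ there exist positive integers $N$ and $M$ such that for every $n>N$ there are matrices $\mathscr R_n[f],\mathscr E_n[f]\in\mathbb{C}^{n\times n}$ with \[ \cos c_n[f]-\cos A_n[f] = \mathscr R_n[f]+\mathscr E_n[f],\qquad \operatorname{rank}\mathscr R_n[f]\le 2M,\qquad \|\mathscr E_n[f]\|_2\le\epsilon. \]
   Context: $\mathcal{C}_{2\pi}$ denotes the Banach space of all $2\pi$-periodic continuous complex-valued functions on $\mathbb{R}$ with the supremum norm $\|\cdot\|_\infty$. For $f\in\mathcal{C}_{2\pi}$ its Fourier coefficients are $a_k=\frac{1}{2\pi}\int_{-\pi}^{\pi} f(\theta)e^{-\mathbf{i}k\theta}\,d\theta$, $k\in\mathbb{Z}$. The Toeplitz matrix generated by $f$ is the $n\times n$ matrix $A_n[f]$ whose $(j,k)$ entry is $a_{j-k}$. The optimal circulant preconditioner $c_n[f]$ is the $n\times n$ circulant matrix whose $(j,k)$ entry is $c_{(j-k)\bmod n}$, where $c_k=\frac{(n-k)a_k+k\,a_{k-n}}{n}$ for $0\le k<n$. For a square matrix $X$, $\cos X=\sum_{m\ge0}\frac{(-1)^m}{(2m)!}X^{2m}$. $\|\cdot\|_2$ is the spectral norm. *)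

theory Defs
  imports "HOL-Analysis.Analysis" "Jordan_Normal_Form.DL_Rank"
begin

definition fourier_coeff :: "(real \<Rightarrow> complex) \<Rightarrow> int \<Rightarrow> complex" where
  "fourier_coeff f k =
     integral {-pi..pi} (\<lambda>\<theta>. f \<theta> * exp (- \<i> * of_int k * of_real \<theta>)) / of_real (2 * pi)"

definition toeplitz_mat :: "(real \<Rightarrow> complex) \<Rightarrow> nat \<Rightarrow> complex mat" where
  "toeplitz_mat f n = mat n n (\<lambda>(j, k). fourier_coeff f (int j - int k))"

definition opt_circ_coeff :: "(real \<Rightarrow> complex) \<Rightarrow> nat \<Rightarrow> int \<Rightarrow> complex" where
  "opt_circ_coeff f n k =
     ((of_int (int n - k)) * fourier_coeff f k + of_int k * fourier_coeff f (k - int n)) / of_nat n"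

definition opt_circulant :: "(real \<Rightarrow> complex) \<Rightarrow> nat \<Rightarrow> complex mat" where
  "opt_circulant f n = mat n n (\<lambda>(j, k). opt_circ_coeff f n ((int j - int k) mod int n))"

definition mat_cos :: "complex mat \<Rightarrow> complex mat" where
  "mat_cos X = mat (dim_row X) (dim_col X)
     (\<lambda>(j, k). \<Sum>m. ((-1) ^ m / of_nat (fact (2 * m))) * ((X ^\<^sub>m (2 * m)) $$ (j, k)))"

definition vec_norm2 :: "complex vec \<Rightarrow> real" where
  "vec_norm2 v = sqrt (\<Sum>i<dim_vec v. (cmod (vec_index v i))\<^sup>2)"

definition spectral_norm :: "complex mat \<Rightarrow> real" where
  "spectral_norm A = Sup {vec_norm2 (A *\<^sub>v v) | v. v \<in> carrier_vec (dim_col A) \<and> vec_norm2 v \<le> 1}"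

definition mat_rank :: "complex mat \<Rightarrow> nat" where
  "mat_rank A = vec_space.rank (dim_row A) (A :: complex mat)"

end

theory Submission
  imports Defs
begin

lemma vn_L2: "vec_norm2 v = L2_set (\<lambda>i. cmod (v $ i)) {..<dim_vec v}"
  by (simp add: vec_norm2_def L2_set_def)

lemma vn_nonneg: "vec_norm2 v \<ge> 0"
  by (simp add: vec_norm2_def sum_nonneg)

lemma vn_add: assumes "dim_vec w = dim_vec u"
  shows "vec_norm2 (u + w) \<le> vec_norm2 u + vec_norm2 w"
proof -
  have "vec_norm2 (u + w) = L2_set (\<lambda>i. cmod (u $ i + w $ i)) {..<dim_vec u}"
    unfolding vn_L2 using assms by (intro L2_set_cong) auto
  also have "\<dots> \<le> L2_set (\<lambda>i. cmod (u $ i) + cmod (w $ i)) {..<dim_vec u}"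
    by (intro L2_set_mono norm_triangle_ineq) auto
  also have "\<dots> \<le> L2_set (\<lambda>i. cmod (u $ i)) {..<dim_vec u} + L2_set (\<lambda>i. cmod (w $ i)) {..<dim_vec u}"
    by (rule L2_set_triangle_ineq)
  finally show ?thesis unfolding vn_L2 using assms by simp
qed

lemma vn_smult: "vec_norm2 (c \<cdot>\<^sub>v u) = cmod c * vec_norm2 u"
proof -
  have "vec_norm2 (c \<cdot>\<^sub>v u) = L2_set (\<lambda>i. cmod c * cmod (u $ i)) {..<dim_vec u}"
    unfolding vn_L2 by (intro L2_set_cong) (auto simp: norm_mult)
  also have "\<dots> = cmod c * vec_norm2 u" unfolding vn_L2 by (simp add: L2_set_right_distrib)
  finally show ?thesis .
qed

lemma vn_uminus: "vec_norm2 (- u) = vec_norm2 u"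
  unfolding vn_L2 by (intro L2_set_cong) auto

lemma vn_zero: "vec_norm2 (0\<^sub>v n) = 0"
  by (simp add: vec_norm2_def)

definition bnd :: "nat \<Rightarrow> complex mat \<Rightarrow> real \<Rightarrow> bool" where
  "bnd n X c \<longleftrightarrow> X \<in> carrier_mat n n \<and> (\<forall>v\<in>carrier_vec n. vec_norm2 (X *\<^sub>v v) \<le> c * vec_norm2 v)"

lemma bndI: "X \<in> carrier_mat n n \<Longrightarrow> (\<And>v. v \<in> carrier_vec n \<Longrightarrow> vec_norm2 (X *\<^sub>v v) \<le> c * vec_norm2 v) \<Longrightarrow> bnd n X c"
  by (auto simp: bnd_def)

lemma bndD: "bnd n X c \<Longrightarrow> v \<in> carrier_vec n \<Longrightarrow> vec_norm2 (X *\<^sub>v v) \<le> c * vec_norm2 v"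
  and bnd_carrier: "bnd n X c \<Longrightarrow> X \<in> carrier_mat n n"
  by (auto simp: bnd_def)

lemma bnd_mono: "bnd n X c \<Longrightarrow> c \<le> d \<Longrightarrow> bnd n X d"
  unfolding bnd_def by (meson mult_right_mono order.trans vn_nonneg)

lemma bnd_mult: assumes "bnd n X a" "bnd n Y b" "a \<ge> 0" shows "bnd n (X * Y) (a * b)"
proof (rule bndI)
  have X: "X \<in> carrier_mat n n" and Y: "Y \<in> carrier_mat n n" using assms bnd_carrier by auto
  then show "X * Y \<in> carrier_mat n n" by auto
  fix v :: "complex vec" assume v: "v \<in> carrier_vec n"
  have "(X * Y) *\<^sub>v v = X *\<^sub>v (Y *\<^sub>v v)" using X Y v by (simp add: assoc_mult_mat_vec)
  also have "vec_norm2 \<dots> \<le> a * vec_norm2 (Y *\<^sub>v v)" using assms(1) Y v by (intro bndD) auto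
  also have "\<dots> \<le> a * (b * vec_norm2 v)" using assms(2,3) v by (intro mult_left_mono bndD) auto
  finally show "vec_norm2 ((X * Y) *\<^sub>v v) \<le> a * b * vec_norm2 v" by simp
qed

lemma bnd_add: assumes "bnd n X a" "bnd n Y b" shows "bnd n (X + Y) (a + b)"
proof (rule bndI)
  have X: "X \<in> carrier_mat n n" and Y: "Y \<in> carrier_mat n n" using assms bnd_carrier by auto
  then show "X + Y \<in> carrier_mat n n" by auto
  fix v :: "complex vec" assume v: "v \<in> carrier_vec n"
  have "(X + Y) *\<^sub>v v = X *\<^sub>v v + Y *\<^sub>v v" using X Y v by (simp add: add_mult_distrib_mat_vec)
  also have "vec_norm2 \<dots> \<le> vec_norm2 (X *\<^sub>v v) + vec_norm2 (Y *\<^sub>v v)" using X Y by (intro vn_add) auto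
  also have "\<dots> \<le> a * vec_norm2 v + b * vec_norm2 v" using assms v by (intro add_mono bndD) auto
  finally show "vec_norm2 ((X + Y) *\<^sub>v v) \<le> (a + b) * vec_norm2 v" by (simp add: algebra_simps)
qed

lemma bnd_smult: assumes "bnd n X a" shows "bnd n (c \<cdot>\<^sub>m X) (cmod c * a)"
proof (rule bndI)
  have X: "X \<in> carrier_mat n n" using assms bnd_carrier by auto
  then show "c \<cdot>\<^sub>m X \<in> carrier_mat n n" by auto
  fix v :: "complex vec" assume v: "v \<in> carrier_vec n"
  have "(c \<cdot>\<^sub>m X) *\<^sub>v v = c \<cdot>\<^sub>v (X *\<^sub>v v)" using X v by (intro eq_vecI) (auto simp: scalar_prod_def sum_distrib_left mult.assoc)
  then have "vec_norm2 ((c \<cdot>\<^sub>m X) *\<^sub>v v) = cmod c * vec_norm2 (X *\<^sub>v v)" by (simp add: vn_smult)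
  also have "\<dots> \<le> cmod c * (a * vec_norm2 v)" using assms v by (intro mult_left_mono bndD) auto
  finally show "vec_norm2 ((c \<cdot>\<^sub>m X) *\<^sub>v v) \<le> cmod c * a * vec_norm2 v" by simp
qed

lemma bnd_uminus: assumes "bnd n X a" shows "bnd n (- X) a"
proof -
  have X: "X \<in> carrier_mat n n" using assms bnd_carrier by auto
  have "- X = (-1) \<cdot>\<^sub>m X" using X by (intro eq_matI) auto
  then show ?thesis using bnd_smult[OF assms, of "-1"] by simp
qed

lemma bnd_minus: assumes "bnd n X a" "bnd n Y b" shows "bnd n (X - Y) (a + b)"
proof -
  have X: "X \<in> carrier_mat n n" and Y: "Y \<in> carrier_mat n n" using assms bnd_carrier by auto
  have "X - Y = X + (- Y)" using X Y by (intro eq_matI) auto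
  then show ?thesis using bnd_add[OF assms(1) bnd_uminus[OF assms(2)]] by simp
qed

lemma mat_zero_vec: "v \<in> carrier_vec n \<Longrightarrow> (0\<^sub>m m n :: complex mat) *\<^sub>v v = 0\<^sub>v m"
  by (intro eq_vecI) (auto simp: scalar_prod_def)

lemma mat_vec_zero: "A \<in> carrier_mat m n \<Longrightarrow> (A :: complex mat) *\<^sub>v 0\<^sub>v n = 0\<^sub>v m"
  by (intro eq_vecI) (auto simp: scalar_prod_def)

lemma bnd_zero: "bnd n (0\<^sub>m n n) 0"
  by (rule bndI) (auto simp: vn_zero mat_zero_vec)

lemma bnd_one: "bnd n (1\<^sub>m n) 1"
  by (rule bndI) auto

lemma bnd_pow: assumes "bnd n X a" "a \<ge> 0" shows "bnd n (X ^\<^sub>m k) (a ^ k)"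
proof (induction k)
  case 0 show ?case using bnd_one bnd_carrier[OF assms(1)] by simp
next
  case (Suc k)
  have "bnd n (X ^\<^sub>m k * X) (a ^ k * a)" using bnd_mult[OF Suc assms(1)] assms(2) by simp
  then show ?case by (simp add: mult.commute)
qed

lemma bnd_nonneg_carrier: "X \<in> carrier_mat n n \<Longrightarrow> bnd n X c \<Longrightarrow> n > 0 \<Longrightarrow> c \<ge> 0"
proof -
  assume "bnd n X c" "n > 0"
  define v :: "complex vec" where "v = unit_vec n 0"
  have v: "v \<in> carrier_vec n" by (simp add: v_def)
  have "vec_norm2 v > 0" using \<open>n > 0\<close> unfolding vec_norm2_def v_def
    by (intro real_sqrt_gt_zero) (auto intro!: sum_pos2[of _ 0])
  moreover have "0 \<le> c * vec_norm2 v" using bndD[OF \<open>bnd n X c\<close> v] vn_nonneg order.trans by blast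
  ultimately show "c \<ge> 0" by (simp add: zero_le_mult_iff)
qed

lemma spectral_norm_le: assumes "bnd n E c" "c \<ge> 0" shows "spectral_norm E \<le> c"
proof -
  have E: "E \<in> carrier_mat n n" using assms bnd_carrier by auto
  have "0 \<in> {vec_norm2 (E *\<^sub>v v) | v. v \<in> carrier_vec (dim_col E) \<and> vec_norm2 v \<le> 1}"
    using E by (intro CollectI exI[of _ "0\<^sub>v n"]) (auto simp: vn_zero mat_vec_zero)
  then show ?thesis unfolding spectral_norm_def
  proof (intro cSup_least, blast)
    fix x assume "x \<in> {vec_norm2 (E *\<^sub>v v) | v. v \<in> carrier_vec (dim_col E) \<and> vec_norm2 v \<le> 1}"
    then obtain v where v: "v \<in> carrier_vec n" "vec_norm2 v \<le> 1" and x: "x = vec_norm2 (E *\<^sub>v v)" using E by auto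
    have "x \<le> c * vec_norm2 v" using bndD[OF assms(1) v(1)] x by simp
    also have "\<dots> \<le> c * 1" using v(2) assms(2) by (intro mult_left_mono) auto
    finally show "x \<le> c" by simp
  qed
qed

fun LR :: "nat \<Rightarrow> nat \<Rightarrow> complex mat \<Rightarrow> bool" where
  "LR n 0 Z = (Z = 0\<^sub>m n n)"
| "LR n (Suc k) Z = (\<exists>u w Z'. LR n k Z' \<and> Z = mat n n (\<lambda>(r, c). u r * w c) + Z')"

lemma LR_carrier: "LR n k Z \<Longrightarrow> Z \<in> carrier_mat n n"
  by (induction k arbitrary: Z) auto

lemma LR_add: "LR n a Z1 \<Longrightarrow> LR n b Z2 \<Longrightarrow> LR n (a + b) (Z1 + Z2)"
proof (induction a arbitrary: Z1)
  case 0
  then have "Z1 + Z2 = Z2" using LR_carrier[OF 0(2)] by auto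
  then show ?case using 0 by simp
next
  case (Suc a)
  then obtain u w Z' where Z': "LR n a Z'" "Z1 = mat n n (\<lambda>(r, c). u r * w c) + Z'" by auto
  have "LR n (a + b) (Z' + Z2)" using Suc Z' by auto
  moreover have "Z1 + Z2 = mat n n (\<lambda>(r, c). u r * w c) + (Z' + Z2)"
    using Z' LR_carrier[OF Z'(1)] LR_carrier[OF Suc(3)] by (intro eq_matI) auto
  ultimately show ?case by auto
qed

lemma LR_zero: "LR n k (0\<^sub>m n n)"
proof (induction k)
  case (Suc k)
  have e: "0\<^sub>m n n = mat n n (\<lambda>(r, c). (\<lambda>_. 0::complex) r * (\<lambda>_. 0::complex) c) + 0\<^sub>m n n"
    by (intro eq_matI) auto
  show ?case by (simp only: LR.simps) (intro exI[of _ "\<lambda>_. 0::complex"] exI[of _ "0\<^sub>m n n"] conjI Suc e)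
qed simp

lemma LR_mono: "LR n a Z \<Longrightarrow> a \<le> b \<Longrightarrow> LR n b Z"
proof -
  assume "LR n a Z" "a \<le> b"
  then have "LR n (a + (b - a)) (Z + 0\<^sub>m n n)" using LR_add LR_zero by blast
  then show ?thesis using \<open>a \<le> b\<close> LR_carrier[OF \<open>LR n a Z\<close>] by simp
qed

lemma LR_lmult: "X \<in> carrier_mat n n \<Longrightarrow> LR n k Z \<Longrightarrow> LR n k (X * Z)"
proof (induction k arbitrary: Z)
  case 0 then show ?case by auto
next
  case (Suc k)
  then obtain u w Z' where Z': "LR n k Z'" "Z = mat n n (\<lambda>(r, c). u r * w c) + Z'" by auto
  have C: "Z' \<in> carrier_mat n n" using LR_carrier[OF Z'(1)] .
  have "X * Z = X * mat n n (\<lambda>(r, c). u r * w c) + X * Z'"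
    unfolding Z'(2) by (rule mult_add_distrib_mat[OF Suc(2) mat_carrier C])
  also have "X * mat n n (\<lambda>(r, c). u r * w c) = mat n n (\<lambda>(r, c). (\<Sum>i<n. X $$ (r, i) * u i) * w c)"
    using Suc(2) by (intro eq_matI) (auto simp: scalar_prod_def sum_distrib_right mult.assoc intro!: sum.cong)
  finally have e: "X * Z = mat n n (\<lambda>(r, c). (\<Sum>i<n. X $$ (r, i) * u i) * w c) + X * Z'" .
  have l: "LR n k (X * Z')" using Suc.IH[OF Suc(2) Z'(1)] .
  show ?case by (simp only: LR.simps) (intro exI[of _ "\<lambda>r. \<Sum>i<n. X $$ (r, i) * u i"] exI[of _ w] exI[of _ "X * Z'"] conjI l e)
qed

lemma LR_rmult: "X \<in> carrier_mat n n \<Longrightarrow> LR n k Z \<Longrightarrow> LR n k (Z * X)"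
proof (induction k arbitrary: Z)
  case 0 then show ?case by auto
next
  case (Suc k)
  then obtain u w Z' where Z': "LR n k Z'" "Z = mat n n (\<lambda>(r, c). u r * w c) + Z'" by auto
  have C: "Z' \<in> carrier_mat n n" using LR_carrier[OF Z'(1)] .
  have "Z * X = mat n n (\<lambda>(r, c). u r * w c) * X + Z' * X"
    unfolding Z'(2) by (rule add_mult_distrib_mat[OF mat_carrier C Suc(2)])
  also have "mat n n (\<lambda>(r, c). u r * w c) * X = mat n n (\<lambda>(r, c). u r * (\<Sum>i<n. w i * X $$ (i, c)))"
    using Suc(2) by (intro eq_matI) (auto simp: scalar_prod_def sum_distrib_left mult.assoc intro!: sum.cong)
  finally have e: "Z * X = mat n n (\<lambda>(r, c). u r * (\<Sum>i<n. w i * X $$ (i, c))) + Z' * X" .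
  have l: "LR n k (Z' * X)" using Suc.IH[OF Suc(2) Z'(1)] .
  show ?case by (simp only: LR.simps) (intro exI[of _ u] exI[of _ "\<lambda>c. \<Sum>i<n. w i * X $$ (i, c)"] exI[of _ "Z' * X"] conjI l e)
qed

lemma LR_smult: "LR n k Z \<Longrightarrow> LR n k (a \<cdot>\<^sub>m Z)"
proof (induction k arbitrary: Z)
  case 0 then show ?case by auto
next
  case (Suc k)
  then obtain u w Z' where Z': "LR n k Z'" "Z = mat n n (\<lambda>(r, c). u r * w c) + Z'" by auto
  have C: "Z' \<in> carrier_mat n n" using LR_carrier[OF Z'(1)] .
  have "a \<cdot>\<^sub>m Z = mat n n (\<lambda>(r, c). (a * u r) * w c) + a \<cdot>\<^sub>m Z'"
    using Z' C by (intro eq_matI) (auto simp: algebra_simps)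
  then have e: "a \<cdot>\<^sub>m Z = mat n n (\<lambda>(r, c). (\<lambda>r. a * u r) r * w c) + a \<cdot>\<^sub>m Z'" by simp
  have l: "LR n k (a \<cdot>\<^sub>m Z')" using Suc.IH[OF Z'(1)] .
  show ?case by (simp only: LR.simps) (intro exI[of _ "\<lambda>r. a * u r"] exI[of _ w] exI[of _ "a \<cdot>\<^sub>m Z'"] conjI l e)
qed

lemma LR_rank: "LR n k Z \<Longrightarrow> mat_rank Z \<le> k"
proof (induction k arbitrary: Z)
  case 0 then show ?case by (simp add: mat_rank_def vec_space.rank_0I)
next
  case (Suc k)
  then obtain u w Z' where Z': "LR n k Z'" "Z = mat n n (\<lambda>(r, c). u r * w c) + Z'" by auto
  have C: "Z' \<in> carrier_mat n n" using LR_carrier[OF Z'(1)] .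
  have "mat_rank Z = vec_space.rank n (mat n n (\<lambda>(r, c). u r * w c) + Z')"
    using Z' C by (simp add: mat_rank_def)
  also have "\<dots> \<le> vec_space.rank n (mat n n (\<lambda>(r, c). u r * w c)) + vec_space.rank n Z'"
    using C by (intro vec_space.rank_subadditive) auto
  also have "vec_space.rank n (mat n n (\<lambda>(r, c). u r * w c)) \<le> 1"
    by (rule vec_space.rank_le_1_product_entries[where f=u and g=w]) auto
  also have "vec_space.rank n Z' \<le> k" using Suc.IH[OF Z'(1)] C by (simp add: mat_rank_def)
  finally show ?case by simp
qed

lemma mat_telescope: "P \<in> carrier_mat n n \<Longrightarrow> Q \<in> carrier_mat n n \<Longrightarrow> S \<in> carrier_mat n n \<Longrightarrow>
  (P - Q) + (Q - S) = P - (S :: complex mat)"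
  by (intro eq_matI) auto

lemma mat_regroup: "P \<in> carrier_mat n n \<Longrightarrow> Q \<in> carrier_mat n n \<Longrightarrow> S \<in> carrier_mat n n \<Longrightarrow> T \<in> carrier_mat n n \<Longrightarrow>
  (P + Q) + (S + T) = (P + S) + (Q + (T :: complex mat))"
  by (intro eq_matI) auto

lemma mat_diff_identity:
  fixes A B X Y :: "complex mat"
  assumes "A \<in> carrier_mat n n" "B \<in> carrier_mat n n" "X \<in> carrier_mat n n" "Y \<in> carrier_mat n n"
  shows "A * X - B * Y = (A - B) * X + B * (X - Y)"
proof -
  have "(A - B) * X + B * (X - Y) = (A * X - B * X) + (B * X - B * Y)"
    using minus_mult_distrib_mat[OF assms(1,2,3)] mult_minus_distrib_mat[OF assms(2,3,4)] by simp
  also have "\<dots> = A * X - B * Y" using assms by (intro mat_telescope) auto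
  finally show ?thesis by simp
qed

lemma pow_diff:
  assumes X: "bnd n X \<rho>" and Y: "bnd n Y \<rho>" and rho: "\<rho> \<ge> 0"
    and D: "X - Y = R + E" and R: "LR n r R" and E: "bnd n E e" and e: "e \<ge> 0"
  shows "\<exists>R' E'. X ^\<^sub>m k - Y ^\<^sub>m k = R' + E' \<and> LR n (k * r) R' \<and> bnd n E' (real k * \<rho> ^ (k - 1) * e)"
proof (induction k)
  case 0
  have Xc: "X \<in> carrier_mat n n" using X bnd_carrier by auto
  have Yc: "Y \<in> carrier_mat n n" using Y bnd_carrier by auto
  have "X ^\<^sub>m 0 - Y ^\<^sub>m 0 = 0\<^sub>m n n + 0\<^sub>m n n" using Xc Yc by (intro eq_matI) auto
  then show ?case using LR_zero bnd_zero by fastforce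
next
  case (Suc k)
  then obtain R' E' where H: "X ^\<^sub>m k - Y ^\<^sub>m k = R' + E'" "LR n (k * r) R'" "bnd n E' (real k * \<rho> ^ (k - 1) * e)"
    by auto
  have Xc: "X \<in> carrier_mat n n" using X bnd_carrier by auto
  have Yc: "Y \<in> carrier_mat n n" using Y bnd_carrier by auto
  have Rc: "R' \<in> carrier_mat n n" using LR_carrier[OF H(2)] .
  have Ec: "E' \<in> carrier_mat n n" using bnd_carrier[OF H(3)] .
  have R0: "R \<in> carrier_mat n n" using LR_carrier[OF R] .
  have E0: "E \<in> carrier_mat n n" using bnd_carrier[OF E] .
  have Yk: "Y ^\<^sub>m k \<in> carrier_mat n n" using Yc by auto
  have "X ^\<^sub>m Suc k - Y ^\<^sub>m Suc k = X ^\<^sub>m k * X - Y ^\<^sub>m k * Y" by simp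
  also have "\<dots> = (X ^\<^sub>m k - Y ^\<^sub>m k) * X + Y ^\<^sub>m k * (X - Y)"
    using Xc Yc by (intro mat_diff_identity) auto
  also have "\<dots> = (R' + E') * X + Y ^\<^sub>m k * (R + E)" using H(1) D by simp
  also have "\<dots> = (R' * X + Y ^\<^sub>m k * R) + (E' * X + Y ^\<^sub>m k * E)"
    using Rc Ec R0 E0 Xc Yk
    using add_mult_distrib_mat[OF Rc Ec Xc] mult_add_distrib_mat[OF Yk R0 E0] mat_regroup[of "R' * X" n "E' * X" "Y ^\<^sub>m k * R" "Y ^\<^sub>m k * E"] Rc Ec R0 E0 Xc Yk by simp
  finally have eq: "X ^\<^sub>m Suc k - Y ^\<^sub>m Suc k = (R' * X + Y ^\<^sub>m k * R) + (E' * X + Y ^\<^sub>m k * E)" .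
  have "LR n (k * r + r) (R' * X + Y ^\<^sub>m k * R)"
    using LR_add LR_rmult[OF Xc H(2)] LR_lmult[OF Yk R] by blast
  moreover have "bnd n (E' * X + Y ^\<^sub>m k * E) (real k * \<rho> ^ (k - 1) * e * \<rho> + \<rho> ^ k * e)"
  proof (rule bnd_add)
    have "real k * \<rho> ^ (k - 1) * e \<ge> 0" using rho e by simp
    then show "bnd n (E' * X) (real k * \<rho> ^ (k - 1) * e * \<rho>)" using bnd_mult[OF H(3) X] by simp
    show "bnd n (Y ^\<^sub>m k * E) (\<rho> ^ k * e)" using bnd_mult[OF bnd_pow[OF Y rho] E] rho by simp
  qed
  moreover have "real k * \<rho> ^ (k - 1) * e * \<rho> + \<rho> ^ k * e = real (Suc k) * \<rho> ^ (Suc k - 1) * e"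
    by (cases k) (auto simp: algebra_simps)
  ultimately show ?case using eq by (auto simp: add.commute)
qed

definition cc :: "nat \<Rightarrow> complex" where "cc m = (-1) ^ m / of_nat (fact (2 * m))"

definition aa :: "real \<Rightarrow> nat \<Rightarrow> real" where "aa \<rho> m = \<rho> ^ (2 * m) / fact (2 * m)"

fun cosP :: "nat \<Rightarrow> complex mat \<Rightarrow> nat \<Rightarrow> complex mat" where
  "cosP n X 0 = 0\<^sub>m n n"
| "cosP n X (Suc K) = cosP n X K + cc K \<cdot>\<^sub>m (X ^\<^sub>m (2 * K))"

lemma cosP_carrier: "X \<in> carrier_mat n n \<Longrightarrow> cosP n X K \<in> carrier_mat n n"
  by (induction K) auto

lemma cosP_index: "X \<in> carrier_mat n n \<Longrightarrow> i < n \<Longrightarrow> j < n \<Longrightarrow>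
   cosP n X K $$ (i, j) = (\<Sum>m<K. cc m * (X ^\<^sub>m (2 * m)) $$ (i, j))"
proof (induction K)
  case (Suc K)
  have "X ^\<^sub>m (2 * K) \<in> carrier_mat n n" using Suc by auto
  then show ?case using Suc cosP_carrier[OF Suc(2), of K] by simp
qed simp

lemma norm_cc: "cmod (cc m) = 1 / fact (2 * m)"
  by (simp add: cc_def norm_divide norm_power)

lemma aa_nonneg: "\<rho> \<ge> 0 \<Longrightarrow> aa \<rho> m \<ge> 0"
  by (simp add: aa_def)

lemma entry_le_vn: "i < dim_vec w \<Longrightarrow> cmod (w $ i) \<le> vec_norm2 w"
proof -
  assume i: "i < dim_vec w"
  have "(cmod (w $ i))\<^sup>2 \<le> (\<Sum>j<dim_vec w. (cmod (w $ j))\<^sup>2)"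
    using i by (intro member_le_sum) auto
  then have "sqrt ((cmod (w $ i))\<^sup>2) \<le> vec_norm2 w" unfolding vec_norm2_def
    using real_sqrt_le_mono by blast
  then show ?thesis by simp
qed

lemma vn_unit: "j < n \<Longrightarrow> vec_norm2 (unit_vec n j :: complex vec) = 1"
proof -
  assume j: "j < n"
  have "(\<Sum>i<n. (cmod ((unit_vec n j :: complex vec) $ i))\<^sup>2) = (\<Sum>i<n. if i = j then 1 else 0)"
    by (intro sum.cong) (auto simp: unit_vec_def)
  also have "\<dots> = 1" using j by simp
  finally show ?thesis by (simp add: vec_norm2_def)
qed

lemma entry_bound: assumes "bnd n X \<rho>" "i < n" "j < n" shows "cmod (X $$ (i, j)) \<le> \<rho>"
proof -
  have X: "X \<in> carrier_mat n n" using assms bnd_carrier by auto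
  have "(X *\<^sub>v unit_vec n j) $ i = (\<Sum>k\<in>{0..<n}. X $$ (i, k) * (if k = j then 1 else 0))"
    using X assms by (auto simp: scalar_prod_def unit_vec_def)
  also have "\<dots> = (\<Sum>k\<in>{0..<n}. if k = j then X $$ (i, k) else 0)"
    by (intro sum.cong) auto
  also have "\<dots> = X $$ (i, j)" using assms by simp
  finally have "X $$ (i, j) = (X *\<^sub>v unit_vec n j) $ i" by simp
  also have "cmod \<dots> \<le> vec_norm2 (X *\<^sub>v unit_vec n j)" using X assms by (intro entry_le_vn) auto
  also have "\<dots> \<le> \<rho> * vec_norm2 (unit_vec n j :: complex vec)" using assms by (intro bndD) auto
  finally show ?thesis using vn_unit assms by simp
qed

lemma summable_aa: "\<rho> \<ge> 0 \<Longrightarrow> summable (aa \<rho>)"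
proof -
  assume r: "\<rho> \<ge> 0"
  have "summable (\<lambda>m. inverse (fact m) * (\<rho>\<^sup>2) ^ m :: real)" by (rule summable_exp)
  then show ?thesis
  proof (rule summable_comparison_test')
    fix m :: nat
    have "fact m \<le> (fact (2 * m) :: real)" by (intro fact_mono) auto
    then have "\<rho> ^ (2 * m) / fact (2 * m) \<le> \<rho> ^ (2 * m) / fact m" using r
      by (intro divide_left_mono) auto
    moreover have "\<rho> ^ (2 * m) = (\<rho>\<^sup>2) ^ m" by (simp add: power_mult)
    ultimately show "norm (aa \<rho> m) \<le> inverse (fact m) * (\<rho>\<^sup>2) ^ m" using r
      by (simp add: aa_def divide_inverse mult.commute)
  qed
qed

lemma cos_term_bound: assumes "bnd n X \<rho>" "\<rho> \<ge> 0" "i < n" "j < n"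
  shows "cmod (cc m * (X ^\<^sub>m (2 * m)) $$ (i, j)) \<le> aa \<rho> m"
proof -
  have "cmod ((X ^\<^sub>m (2 * m)) $$ (i, j)) \<le> \<rho> ^ (2 * m)"
    using entry_bound[OF bnd_pow[OF assms(1,2)] assms(3,4)] .
  then show ?thesis unfolding norm_mult norm_cc aa_def
    by (simp add: divide_right_mono)
qed

lemma cos_summable: assumes "bnd n X \<rho>" "\<rho> \<ge> 0" "i < n" "j < n"
  shows "summable (\<lambda>m. cc m * (X ^\<^sub>m (2 * m)) $$ (i, j))"
  by (rule summable_norm_cancel, rule summable_comparison_test'[OF summable_aa[OF assms(2)]])
     (use cos_term_bound[OF assms] in auto)

lemma mat_cos_index: assumes "X \<in> carrier_mat n n" "i < n" "j < n"
  shows "mat_cos X $$ (i, j) = (\<Sum>m. cc m * (X ^\<^sub>m (2 * m)) $$ (i, j))"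
  using assms by (simp add: mat_cos_def cc_def)

lemma mat_cos_carrier: "X \<in> carrier_mat n n \<Longrightarrow> mat_cos X \<in> carrier_mat n n"
  by (simp add: mat_cos_def)

lemma cosP_diff_bnd: assumes "bnd n X \<rho>" "\<rho> \<ge> 0"
  shows "bnd n (cosP n X (K + L) - cosP n X K) (\<Sum>m\<in>{K..<K+L}. aa \<rho> m)"
proof (induction L)
  case 0
  have X: "X \<in> carrier_mat n n" using assms bnd_carrier by auto
  have "cosP n X (K + 0) - cosP n X K = 0\<^sub>m n n" using cosP_carrier[OF X, of K] by (intro eq_matI) auto
  then show ?case using bnd_zero by simp
next
  case (Suc L)
  have X: "X \<in> carrier_mat n n" using assms bnd_carrier by auto
  have P: "X ^\<^sub>m (2 * (K + L)) \<in> carrier_mat n n" using X by auto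
  have "cosP n X (K + Suc L) - cosP n X K = (cosP n X (K + L) - cosP n X K) + cc (K + L) \<cdot>\<^sub>m (X ^\<^sub>m (2 * (K + L)))"
    using cosP_carrier[OF X, of "K+L"] cosP_carrier[OF X, of K] P carrier_matD[OF X] by (intro eq_matI) auto
  moreover have "bnd n (cc (K + L) \<cdot>\<^sub>m (X ^\<^sub>m (2 * (K + L)))) (aa \<rho> (K + L))"
    using bnd_smult[OF bnd_pow[OF assms, of "2 * (K + L)"], of "cc (K + L)"] by (simp add: norm_cc aa_def)
  ultimately show ?case using bnd_add[OF Suc] by simp
qed

lemma tail_bnd: assumes "bnd n X \<rho>" "\<rho> \<ge> 0"
  shows "bnd n (mat_cos X - cosP n X K) (\<Sum>i. aa \<rho> (i + K))"
proof (rule bndI)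
  have X: "X \<in> carrier_mat n n" using assms bnd_carrier by auto
  define T where "T = mat_cos X - cosP n X K"
  have Tc: "T \<in> carrier_mat n n" unfolding T_def by (rule minus_carrier_mat[OF cosP_carrier[OF X, of K]])
  then show "mat_cos X - cosP n X K \<in> carrier_mat n n" unfolding T_def .
  fix v :: "complex vec" assume v: "v \<in> carrier_vec n"
  define D where "D L = cosP n X (K + L) - cosP n X K" for L
  have Dc: "D L \<in> carrier_mat n n" for L unfolding D_def by (rule minus_carrier_mat[OF cosP_carrier[OF X, of K]])
  have sa: "summable (\<lambda>i. aa \<rho> (i + K))" using summable_aa[OF assms(2)] by (simp add: summable_iff_shift)
  have bD: "vec_norm2 (D L *\<^sub>v v) \<le> (\<Sum>i. aa \<rho> (i + K)) * vec_norm2 v" for L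
  proof -
    have "vec_norm2 (D L *\<^sub>v v) \<le> (\<Sum>m\<in>{K..<K+L}. aa \<rho> m) * vec_norm2 v"
      using bndD[OF cosP_diff_bnd[OF assms] v] by (simp add: D_def)
    also have "(\<Sum>m\<in>{K..<K+L}. aa \<rho> m) = (\<Sum>i<L. aa \<rho> (i + K))"
      by (rule sum.reindex_bij_witness[of _ "\<lambda>i. i + K" "\<lambda>m. m - K"]) auto
    also have "\<dots> \<le> (\<Sum>i. aa \<rho> (i + K))"
      using sa by (intro sum_le_suminf) (auto intro: aa_nonneg[OF assms(2)])
    finally show ?thesis using vn_nonneg by (metis mult_right_mono order.trans)
  qed
  have entry_lim: "(\<lambda>L. D L $$ (i, j)) \<longlonglongrightarrow> T $$ (i, j)" if ij: "i < n" "j < n" for i j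
  proof -
    have s: "summable (\<lambda>m. cc m * (X ^\<^sub>m (2 * m)) $$ (i, j))" using cos_summable[OF assms ij] .
    have "(\<lambda>N. \<Sum>m<N. cc m * (X ^\<^sub>m (2 * m)) $$ (i, j)) \<longlonglongrightarrow> mat_cos X $$ (i, j)"
      using summable_LIMSEQ[OF s] mat_cos_index[OF X ij] by simp
    then have "(\<lambda>L. \<Sum>m<L + K. cc m * (X ^\<^sub>m (2 * m)) $$ (i, j)) \<longlonglongrightarrow> mat_cos X $$ (i, j)"
      by (rule LIMSEQ_ignore_initial_segment)
    then have "(\<lambda>L. cosP n X (K + L) $$ (i, j) - cosP n X K $$ (i, j)) \<longlonglongrightarrow> mat_cos X $$ (i, j) - cosP n X K $$ (i, j)"
      using cosP_index[OF X ij] by (intro tendsto_diff) (simp_all add: add.commute)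
    moreover have "(cosP n X (K + L) - cosP n X K) $$ (i, j) = cosP n X (K + L) $$ (i, j) - cosP n X K $$ (i, j)" for L
      using cosP_carrier[OF X, of K] ij by simp
    moreover have "(mat_cos X - cosP n X K) $$ (i, j) = mat_cos X $$ (i, j) - cosP n X K $$ (i, j)"
      using cosP_carrier[OF X, of K] ij by simp
    ultimately show ?thesis by (simp add: D_def T_def)
  qed
  have vec_lim: "(\<lambda>L. (D L *\<^sub>v v) $ i) \<longlonglongrightarrow> (T *\<^sub>v v) $ i" if i: "i < n" for i
  proof -
    have "(\<lambda>L. \<Sum>j<n. D L $$ (i, j) * v $ j) \<longlonglongrightarrow> (\<Sum>j<n. T $$ (i, j) * v $ j)"
      using entry_lim i by (intro tendsto_sum tendsto_mult tendsto_const) auto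
    moreover have "(D L *\<^sub>v v) $ i = (\<Sum>j<n. D L $$ (i, j) * v $ j)" for L
      using i Dc[of L] v by (simp add: scalar_prod_def atLeast0LessThan)
    moreover have "(T *\<^sub>v v) $ i = (\<Sum>j<n. T $$ (i, j) * v $ j)"
      using i Tc v by (simp add: scalar_prod_def atLeast0LessThan)
    ultimately show ?thesis by simp
  qed
  have "(\<lambda>L. vec_norm2 (D L *\<^sub>v v)) \<longlonglongrightarrow> vec_norm2 (T *\<^sub>v v)"
  proof -
    have "(\<lambda>L. sqrt (\<Sum>i<n. (cmod ((D L *\<^sub>v v) $ i))\<^sup>2)) \<longlonglongrightarrow> sqrt (\<Sum>i<n. (cmod ((T *\<^sub>v v) $ i))\<^sup>2)"
      using vec_lim by (intro tendsto_intros) auto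
    moreover have "vec_norm2 (D L *\<^sub>v v) = sqrt (\<Sum>i<n. (cmod ((D L *\<^sub>v v) $ i))\<^sup>2)" for L
      unfolding vec_norm2_def using Dc[of L] by simp
    moreover have "vec_norm2 (T *\<^sub>v v) = sqrt (\<Sum>i<n. (cmod ((T *\<^sub>v v) $ i))\<^sup>2)"
      unfolding vec_norm2_def using Tc by simp
    ultimately show ?thesis by simp
  qed
  then show "vec_norm2 ((mat_cos X - cosP n X K) *\<^sub>v v) \<le> (\<Sum>i. aa \<rho> (i + K)) * vec_norm2 v"
    using bD unfolding T_def by (intro LIMSEQ_le_const2) auto
qed

lemma kpow_le: assumes "\<rho> \<ge> 0" shows "real k * \<rho> ^ (k - 1) \<le> (2 + 2 * \<rho>) ^ k"
proof -
  have "real k \<le> 2 ^ k" using less_exp[of k] by (metis of_nat_le_iff of_nat_numeral of_nat_power less_imp_le)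
  moreover have "\<rho> ^ (k - 1) \<le> (1 + \<rho>) ^ k"
  proof -
    have "\<rho> ^ (k - 1) \<le> (1 + \<rho>) ^ (k - 1)" using assms by (intro power_mono) auto
    also have "\<dots> \<le> (1 + \<rho>) ^ k" using assms by (intro power_increasing) auto
    finally show ?thesis .
  qed
  ultimately have "real k * \<rho> ^ (k - 1) \<le> 2 ^ k * (1 + \<rho>) ^ k"
    using assms by (intro mult_mono) auto
  also have "\<dots> = (2 + 2 * \<rho>) ^ k" by (simp add: power_mult_distrib[symmetric] algebra_simps)
  finally show ?thesis .
qed

lemma mat_step_regroup:
  fixes A B P Q :: "complex mat"
  assumes "A \<in> carrier_mat n n" "B \<in> carrier_mat n n" "P \<in> carrier_mat n n" "Q \<in> carrier_mat n n"
  shows "(A + c \<cdot>\<^sub>m P) - (B + c \<cdot>\<^sub>m Q) = (A - B) + c \<cdot>\<^sub>m (P - Q)"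
  using assms by (intro eq_matI) (auto simp: algebra_simps)

lemma smult_add_mat': "P \<in> carrier_mat n n \<Longrightarrow> Q \<in> carrier_mat n n \<Longrightarrow> (c::complex) \<cdot>\<^sub>m (P + Q) = c \<cdot>\<^sub>m P + c \<cdot>\<^sub>m Q"
  by (intro eq_matI) (auto simp: algebra_simps)

lemma cosP_diff:
  assumes X: "bnd n X \<rho>" and Y: "bnd n Y \<rho>" and rho: "\<rho> \<ge> 0"
    and D: "X - Y = R + E" and R: "LR n r R" and E: "bnd n E e" and e: "e \<ge> 0"
  shows "\<exists>R' E'. cosP n X K - cosP n Y K = R' + E' \<and> LR n (2 * K * K * r) R' \<and>
            bnd n E' (e * (\<Sum>m<K. aa (2 + 2 * \<rho>) m))"
proof (induction K)
  case 0
  have "cosP n X 0 - cosP n Y 0 = 0\<^sub>m n n + 0\<^sub>m n n" by (intro eq_matI) auto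
  then show ?case using LR_zero bnd_zero by fastforce
next
  case (Suc K)
  then obtain R' E' where H: "cosP n X K - cosP n Y K = R' + E'" "LR n (2 * K * K * r) R'"
      "bnd n E' (e * (\<Sum>m<K. aa (2 + 2 * \<rho>) m))" by auto
  obtain R2 E2 where P: "X ^\<^sub>m (2 * K) - Y ^\<^sub>m (2 * K) = R2 + E2" "LR n (2 * K * r) R2"
      "bnd n E2 (real (2 * K) * \<rho> ^ (2 * K - 1) * e)"
    using pow_diff[OF X Y rho D R E e] by blast
  have Xc: "X \<in> carrier_mat n n" using X bnd_carrier by auto
  have Yc: "Y \<in> carrier_mat n n" using Y bnd_carrier by auto
  have R2c: "R2 \<in> carrier_mat n n" using LR_carrier[OF P(2)] .
  have E2c: "E2 \<in> carrier_mat n n" using bnd_carrier[OF P(3)] .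
  have Rc: "R' \<in> carrier_mat n n" using LR_carrier[OF H(2)] .
  have Ec: "E' \<in> carrier_mat n n" using bnd_carrier[OF H(3)] .
  have "cosP n X (Suc K) - cosP n Y (Suc K) = (cosP n X K - cosP n Y K) + cc K \<cdot>\<^sub>m (X ^\<^sub>m (2 * K) - Y ^\<^sub>m (2 * K))"
    using Xc Yc by (simp, intro mat_step_regroup[where n=n] cosP_carrier) auto
  also have "\<dots> = (R' + E') + (cc K \<cdot>\<^sub>m R2 + cc K \<cdot>\<^sub>m E2)"
    unfolding H(1) P(1) using smult_add_mat'[OF R2c E2c] by simp
  also have "\<dots> = (R' + cc K \<cdot>\<^sub>m R2) + (E' + cc K \<cdot>\<^sub>m E2)"
    using mat_regroup[of R' n E' "cc K \<cdot>\<^sub>m R2" "cc K \<cdot>\<^sub>m E2"] Rc Ec R2c E2c by simp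
  finally have eq: "cosP n X (Suc K) - cosP n Y (Suc K) = (R' + cc K \<cdot>\<^sub>m R2) + (E' + cc K \<cdot>\<^sub>m E2)" .
  have "LR n (2 * K * K * r + 2 * K * r) (R' + cc K \<cdot>\<^sub>m R2)"
    using LR_add[OF H(2) LR_smult[OF P(2)]] .
  then have lr: "LR n (2 * Suc K * Suc K * r) (R' + cc K \<cdot>\<^sub>m R2)"
    by (rule LR_mono) (simp add: algebra_simps)
  have b2: "bnd n (cc K \<cdot>\<^sub>m E2) (cmod (cc K) * (real (2 * K) * \<rho> ^ (2 * K - 1) * e))"
    using bnd_smult[OF P(3)] .
  have "cmod (cc K) * (real (2 * K) * \<rho> ^ (2 * K - 1) * e) \<le> e * aa (2 + 2 * \<rho>) K"
  proof -
    have "real (2 * K) * \<rho> ^ (2 * K - 1) \<le> (2 + 2 * \<rho>) ^ (2 * K)" using kpow_le[OF rho] .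
    then have "real (2 * K) * \<rho> ^ (2 * K - 1) / fact (2 * K) \<le> (2 + 2 * \<rho>) ^ (2 * K) / fact (2 * K)"
      by (intro divide_right_mono) auto
    then have "e * (real (2 * K) * \<rho> ^ (2 * K - 1) / fact (2 * K)) \<le> e * ((2 + 2 * \<rho>) ^ (2 * K) / fact (2 * K))"
      using e by (rule mult_left_mono)
    then show ?thesis unfolding norm_cc aa_def by (simp add: field_simps)
  qed
  then have "bnd n (E' + cc K \<cdot>\<^sub>m E2) (e * (\<Sum>m<K. aa (2 + 2 * \<rho>) m) + e * aa (2 + 2 * \<rho>) K)"
    using bnd_add[OF H(3) bnd_mono[OF b2]] by blast
  then have "bnd n (E' + cc K \<cdot>\<^sub>m E2) (e * (\<Sum>m<Suc K. aa (2 + 2 * \<rho>) m))"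
    by (simp add: algebra_simps)
  then show ?case using eq lr by blast
qed

lemma cos_perturb:
  assumes eps: "\<epsilon> > 0" and rho: "\<rho> \<ge> 0"
  shows "\<exists>K::nat. \<exists>\<delta>>0. \<forall>n X Y R E r. bnd n X \<rho> \<longrightarrow> bnd n Y \<rho> \<longrightarrow> X - Y = R + E \<longrightarrow> LR n r R \<longrightarrow> bnd n E \<delta> \<longrightarrow>
     (\<exists>R' E'. mat_cos X - mat_cos Y = R' + E' \<and> LR n (2 * K * K * r) R' \<and> bnd n E' \<epsilon>)"
proof -
  obtain K where K: "\<And>k. k \<ge> K \<Longrightarrow> norm (\<Sum>i. aa \<rho> (i + k)) < \<epsilon> / 4"
    using suminf_exist_split[OF _ summable_aa[OF rho], of "\<epsilon> / 4"] eps by auto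
  define B where "B = (\<Sum>m. aa (2 + 2 * \<rho>) m)"
  have sB: "summable (aa (2 + 2 * \<rho>))" using summable_aa rho by simp
  have B0: "B \<ge> 0" unfolding B_def using sB by (intro suminf_nonneg aa_nonneg) (use rho in auto)
  define \<delta> where "\<delta> = \<epsilon> / (2 * (B + 1))"
  have d0: "\<delta> > 0" using eps B0 by (simp add: \<delta>_def)
  have dB: "\<delta> * B \<le> \<epsilon> / 2"
  proof -
    have "\<delta> * B \<le> \<delta> * (B + 1)" using d0 by simp
    also have "\<dots> = \<epsilon> / 2" using B0 by (simp add: \<delta>_def field_simps)
    finally show ?thesis .
  qed
  have tau: "(\<Sum>i. aa \<rho> (i + K)) \<le> \<epsilon> / 4"
  proof -
    have "(\<Sum>i. aa \<rho> (i + K)) \<ge> 0"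
      using summable_aa[OF rho] by (intro suminf_nonneg) (auto simp: summable_iff_shift intro: aa_nonneg[OF rho])
    then show ?thesis using K[of K] by simp
  qed
  show ?thesis
  proof (intro exI[of _ K] exI[of _ \<delta>] conjI d0 allI impI)
    fix n X Y R E r
    assume X: "bnd n X \<rho>" and Y: "bnd n Y \<rho>" and D: "X - Y = R + E" and R: "LR n r R" and E: "bnd n E \<delta>"
    obtain R' E' where H: "cosP n X K - cosP n Y K = R' + E'" "LR n (2 * K * K * r) R'"
      "bnd n E' (\<delta> * (\<Sum>m<K. aa (2 + 2 * \<rho>) m))"
      using cosP_diff[OF X Y rho D R E] d0 by force
    have Xc: "X \<in> carrier_mat n n" using X bnd_carrier by auto
    have Yc: "Y \<in> carrier_mat n n" using Y bnd_carrier by auto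
    have Rc: "R' \<in> carrier_mat n n" using LR_carrier[OF H(2)] .
    have Ec: "E' \<in> carrier_mat n n" using bnd_carrier[OF H(3)] .
    have tX: "bnd n (mat_cos X - cosP n X K) (\<Sum>i. aa \<rho> (i + K))" using tail_bnd[OF X rho] .
    have tY: "bnd n (mat_cos Y - cosP n Y K) (\<Sum>i. aa \<rho> (i + K))" using tail_bnd[OF Y rho] .
    have eq: "mat_cos X - mat_cos Y = R' + (((mat_cos X - cosP n X K) - (mat_cos Y - cosP n Y K)) + E')"
    proof -
      have "mat_cos X - mat_cos Y = ((mat_cos X - cosP n X K) - (mat_cos Y - cosP n Y K)) + (cosP n X K - cosP n Y K)"
        using mat_cos_carrier[OF Xc] mat_cos_carrier[OF Yc] cosP_carrier[OF Xc, of K] cosP_carrier[OF Yc, of K]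
        by (intro eq_matI) auto
      also have "\<dots> = R' + (((mat_cos X - cosP n X K) - (mat_cos Y - cosP n Y K)) + E')"
        unfolding H(1)
        using mat_cos_carrier[OF Xc] mat_cos_carrier[OF Yc] cosP_carrier[OF Xc, of K] cosP_carrier[OF Yc, of K] Rc Ec
        by (intro eq_matI) auto
      finally show ?thesis .
    qed
    have "(\<Sum>m<K. aa (2 + 2 * \<rho>) m) \<le> B"
      unfolding B_def using sB by (intro sum_le_suminf) (use rho aa_nonneg in auto)
    then have "\<delta> * (\<Sum>m<K. aa (2 + 2 * \<rho>) m) \<le> \<epsilon> / 2" using dB d0
      by (meson mult_left_mono less_imp_le order.trans)
    then have "bnd n (((mat_cos X - cosP n X K) - (mat_cos Y - cosP n Y K)) + E')
        ((\<Sum>i. aa \<rho> (i + K)) + (\<Sum>i. aa \<rho> (i + K)) + \<epsilon> / 2)"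
      using bnd_add[OF bnd_minus[OF tX tY] bnd_mono[OF H(3)]] by blast
    then have "bnd n (((mat_cos X - cosP n X K) - (mat_cos Y - cosP n Y K)) + E') \<epsilon>"
      by (rule bnd_mono) (use tau in auto)
    then show "\<exists>R' E'. mat_cos X - mat_cos Y = R' + E' \<and> LR n (2 * K * K * r) R' \<and> bnd n E' \<epsilon>"
      using eq H(2) by blast
  qed
qed

definition toep :: "nat \<Rightarrow> (int \<Rightarrow> complex) \<Rightarrow> complex mat" where
  "toep n t = mat n n (\<lambda>(j, k). t (int j - int k))"

definition occ :: "nat \<Rightarrow> (int \<Rightarrow> complex) \<Rightarrow> int \<Rightarrow> complex" where
  "occ n t k = (of_int (int n - k) * t k + of_int k * t (k - int n)) / of_nat n"

definition circ :: "nat \<Rightarrow> (int \<Rightarrow> complex) \<Rightarrow> complex mat" where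
  "circ n t = mat n n (\<lambda>(j, k). occ n t ((int j - int k) mod int n))"

lemma toeplitz_eq: "toeplitz_mat f n = toep n (fourier_coeff f)"
  by (simp add: toeplitz_mat_def toep_def)

lemma circ_eq: "opt_circulant f n = circ n (fourier_coeff f)"
  by (simp add: opt_circulant_def circ_def occ_def opt_circ_coeff_def)

lemma mat_vec_index: "v \<in> carrier_vec n \<Longrightarrow> j < m \<Longrightarrow> (mat m n F *\<^sub>v v) $ j = (\<Sum>k<n. F (j, k) * v $ k)"
  by (simp add: scalar_prod_def atLeast0LessThan)

lemma bnd_matI:
  assumes "\<And>v. v \<in> carrier_vec n \<Longrightarrow>
     L2_set (\<lambda>j. cmod (\<Sum>k<n. F (j, k) * v $ k)) {..<n} \<le> c * L2_set (\<lambda>k. cmod (v $ k)) {..<n}"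
  shows "bnd n (mat n n F) c"
proof (rule bndI)
  show "mat n n F \<in> carrier_mat n n" by simp
  fix v :: "complex vec" assume v: "v \<in> carrier_vec n"
  have "vec_norm2 (mat n n F *\<^sub>v v) = L2_set (\<lambda>j. cmod (\<Sum>k<n. F (j, k) * v $ k)) {..<n}"
    unfolding vn_L2
  proof (intro L2_set_cong)
    fix j assume "j \<in> {..<n}"
    then have j: "j < n" by simp
    show "cmod ((mat n n F *\<^sub>v v) $ j) = cmod (\<Sum>k<n. F (j, k) * v $ k)"
      by (subst mat_vec_index[OF v j]) simp
  qed simp
  also have "\<dots> \<le> c * L2_set (\<lambda>k. cmod (v $ k)) {..<n}" using assms v by blast
  finally show "vec_norm2 (mat n n F *\<^sub>v v) \<le> c * vec_norm2 v" using v by (simp add: vn_L2)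
qed

lemma int_in_image: "0 \<le> i \<Longrightarrow> i < int n \<Longrightarrow> i \<in> int ` {..<n}"
  by (rule image_eqI[of _ _ "nat i"]) auto

lemma L2_sum: "finite D \<Longrightarrow> L2_set (\<lambda>j. cmod (\<Sum>d\<in>D. h d j)) J \<le> (\<Sum>d\<in>D. L2_set (\<lambda>j. cmod (h d j)) J)"
proof (induction D rule: finite_induct)
  case empty then show ?case by (simp add: L2_set_def)
next
  case (insert a D)
  have "L2_set (\<lambda>j. cmod (\<Sum>d\<in>insert a D. h d j)) J \<le> L2_set (\<lambda>j. cmod (h a j) + cmod (\<Sum>d\<in>D. h d j)) J"
    using insert by (intro L2_set_mono) (auto intro: norm_triangle_ineq)
  also have "\<dots> \<le> L2_set (\<lambda>j. cmod (h a j)) J + L2_set (\<lambda>j. cmod (\<Sum>d\<in>D. h d j)) J"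
    by (rule L2_set_triangle_ineq)
  also have "\<dots> \<le> L2_set (\<lambda>j. cmod (h a j)) J + (\<Sum>d\<in>D. L2_set (\<lambda>j. cmod (h d j)) J)"
    using insert by simp
  finally show ?case using insert by simp
qed

lemma L2_scale: "L2_set (\<lambda>j. cmod (c * f j)) J = cmod c * L2_set (\<lambda>j. cmod (f j)) J"
  by (simp add: norm_mult L2_set_right_distrib)

lemma shift_sq_le:
  fixes U :: "int \<Rightarrow> complex"
  assumes U: "\<And>i. i < 0 \<or> i \<ge> int n \<Longrightarrow> U i = 0"
  shows "(\<Sum>j<n. (cmod (U (int j - d)))\<^sup>2) \<le> (\<Sum>k<n. (cmod (U (int k)))\<^sup>2)"
proof -
  define \<phi> where "\<phi> i = (cmod (U i))\<^sup>2" for i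
  define A where "A = (\<lambda>j. int j - d) ` {..<n}"
  define B where "B = int ` {..<n}"
  have "(\<Sum>j<n. \<phi> (int j - d)) = (\<Sum>i\<in>A. \<phi> i)"
    unfolding A_def by (subst sum.reindex) (auto simp: inj_on_def)
  also have "\<dots> \<le> (\<Sum>i\<in>A \<union> B. \<phi> i)"
    by (intro sum_mono2) (auto simp: A_def B_def \<phi>_def)
  also have "\<dots> = (\<Sum>i\<in>B. \<phi> i)"
  proof (rule sum.mono_neutral_right)
    show "finite (A \<union> B)" by (auto simp: A_def B_def)
    show "B \<subseteq> A \<union> B" by auto
    show "\<forall>i\<in>A \<union> B - B. \<phi> i = 0"
    proof
      fix i assume "i \<in> A \<union> B - B"
      then have "i < 0 \<or> i \<ge> int n" unfolding B_def using int_in_image[of i n] by auto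
      then show "\<phi> i = 0" using U by (simp add: \<phi>_def)
    qed
  qed
  also have "\<dots> = (\<Sum>k<n. \<phi> (int k))" unfolding B_def by (subst sum.reindex) auto
  finally show ?thesis by (simp add: \<phi>_def)
qed

lemma band_sum_eq:
  fixes U :: "int \<Rightarrow> complex"
  assumes e: "\<And>d. \<bar>d\<bar> > int M \<Longrightarrow> e d = 0"
    and U: "\<And>i. i < 0 \<or> i \<ge> int n \<Longrightarrow> U i = 0"
  shows "(\<Sum>k<n. e (int j - int k) * U (int k)) = (\<Sum>d\<in>{-int M..int M}. e d * U (int j - d))"
proof -
  define g where "g i = e (int j - i) * U i" for i
  have "(\<Sum>k<n. e (int j - int k) * U (int k)) = (\<Sum>i\<in>int ` {..<n}. g i)"
    by (subst sum.reindex) (auto simp: g_def)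
  also have "\<dots> = (\<Sum>i\<in>int ` {..<n} \<union> {int j - int M..int j + int M}. g i)"
  proof (rule sum.mono_neutral_left)
    show "\<forall>i\<in>int ` {..<n} \<union> {int j - int M..int j + int M} - int ` {..<n}. g i = 0"
    proof
      fix i assume "i \<in> int ` {..<n} \<union> {int j - int M..int j + int M} - int ` {..<n}"
      then have "i < 0 \<or> i \<ge> int n" using int_in_image[of i n] by auto
      then show "g i = 0" using U by (simp add: g_def)
    qed
  qed auto
  also have "\<dots> = (\<Sum>i\<in>{int j - int M..int j + int M}. g i)"
  proof (rule sum.mono_neutral_right)
    show "\<forall>i\<in>int ` {..<n} \<union> {int j - int M..int j + int M} - {int j - int M..int j + int M}. g i = 0"
    proof
      fix i assume "i \<in> int ` {..<n} \<union> {int j - int M..int j + int M} - {int j - int M..int j + int M}"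
      then have "\<bar>int j - i\<bar> > int M" by auto
      then show "g i = 0" using e by (simp add: g_def)
    qed
  qed auto
  also have "\<dots> = (\<Sum>d\<in>{-int M..int M}. e d * U (int j - d))"
    unfolding g_def by (rule sum.reindex_bij_witness[of _ "\<lambda>d. int j - d" "\<lambda>i. int j - i"]) auto
  finally show ?thesis .
qed

lemma band_bnd:
  assumes e: "\<And>d. \<bar>d\<bar> > int M \<Longrightarrow> e d = 0" and w: "\<And>k. cmod (w k) \<le> 1"
  shows "bnd n (mat n n (\<lambda>(j, k). w k * e (int j - int k))) (\<Sum>d\<in>{-int M..int M}. cmod (e d))"
proof (rule bnd_matI)
  fix v :: "complex vec" assume v: "v \<in> carrier_vec n"
  define U where "U i = (if 0 \<le> i \<and> i < int n then w (nat i) * v $ nat i else 0)" for i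
  have U0: "U i = 0" if "i < 0 \<or> i \<ge> int n" for i using that by (auto simp: U_def)
  have "L2_set (\<lambda>j. cmod (\<Sum>k<n. (case (j, k) of (j, k) \<Rightarrow> w k * e (int j - int k)) * v $ k)) {..<n}
      = L2_set (\<lambda>j. cmod (\<Sum>d\<in>{-int M..int M}. e d * U (int j - d))) {..<n}"
  proof (rule L2_set_cong)
    fix j assume "j \<in> {..<n}"
    have "(\<Sum>k<n. (case (j, k) of (j, k) \<Rightarrow> w k * e (int j - int k)) * v $ k) = (\<Sum>k<n. e (int j - int k) * U (int k))"
      by (intro sum.cong) (auto simp: U_def)
    also have "\<dots> = (\<Sum>d\<in>{-int M..int M}. e d * U (int j - d))" by (rule band_sum_eq[OF e U0])
    finally show "cmod (\<Sum>k<n. (case (j, k) of (j, k) \<Rightarrow> w k * e (int j - int k)) * v $ k) =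
        cmod (\<Sum>d\<in>{-int M..int M}. e d * U (int j - d))" by simp
  qed simp
  also have "\<dots> \<le> (\<Sum>d\<in>{-int M..int M}. L2_set (\<lambda>j. cmod (e d * U (int j - d))) {..<n})"
    by (rule L2_sum) simp
  also have "\<dots> \<le> (\<Sum>d\<in>{-int M..int M}. cmod (e d) * L2_set (\<lambda>k. cmod (v $ k)) {..<n})"
  proof (rule sum_mono)
    fix d
    have "L2_set (\<lambda>j. cmod (U (int j - d))) {..<n} \<le> L2_set (\<lambda>k. cmod (v $ k)) {..<n}"
    proof -
      have "(\<Sum>j<n. (cmod (U (int j - d)))\<^sup>2) \<le> (\<Sum>k<n. (cmod (U (int k)))\<^sup>2)" by (rule shift_sq_le[OF U0])
      also have "\<dots> \<le> (\<Sum>k<n. (cmod (v $ k))\<^sup>2)"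
      proof (rule sum_mono)
        fix k assume "k \<in> {..<n}"
        have "cmod (U (int k)) \<le> cmod (v $ k)" using \<open>k \<in> {..<n}\<close> w[of k]
          by (auto simp: U_def norm_mult intro: mult_left_le_one_le)
        then show "(cmod (U (int k)))\<^sup>2 \<le> (cmod (v $ k))\<^sup>2" by (intro power_mono) auto
      qed
      finally show ?thesis unfolding L2_set_def by (rule real_sqrt_le_mono)
    qed
    then show "L2_set (\<lambda>j. cmod (e d * U (int j - d))) {..<n} \<le> cmod (e d) * L2_set (\<lambda>k. cmod (v $ k)) {..<n}"
      unfolding L2_scale by (intro mult_left_mono) auto
  qed
  finally show "L2_set (\<lambda>j. cmod (\<Sum>k<n. (case (j, k) of (j, k) \<Rightarrow> w k * e (int j - int k)) * v $ k)) {..<n}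
       \<le> (\<Sum>d\<in>{-int M..int M}. cmod (e d)) * L2_set (\<lambda>k. cmod (v $ k)) {..<n}"
    by (simp add: sum_distrib_right)
qed

lemma LR_mask: "finite S \<Longrightarrow> LR n (card S) (mat n n (\<lambda>(j, k). if k \<in> S then F j k else 0))"
proof (induction S rule: finite_induct)
  case empty
  have e: "mat n n (\<lambda>(j, k). if k \<in> {} then F j k else 0) = 0\<^sub>m n n" by (intro eq_matI) auto
  show ?case unfolding card.empty LR.simps(1) by (rule e)
next
  case (insert a S)
  have e: "mat n n (\<lambda>(j, k). if k \<in> insert a S then F j k else 0) =
     mat n n (\<lambda>(r, c). (\<lambda>j. F j a) r * (\<lambda>k. if k = a then 1 else 0) c) + mat n n (\<lambda>(j, k). if k \<in> S then F j k else 0)"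
    using insert by (intro eq_matI) auto
  have c: "card (insert a S) = Suc (card S)" using insert by simp
  show ?case unfolding c LR.simps(2) by
     (rule exI[of _ "\<lambda>j. F j a"], rule exI[of _ "\<lambda>k. if k = a then 1 else 0"],
      rule exI[of _ "mat n n (\<lambda>(j, k). if k \<in> S then F j k else 0)"], intro conjI insert(3) e)
qed

lemma mid_entry:
  assumes t: "\<And>d. \<bar>d\<bar> > int M \<Longrightarrow> t d = 0" and n: "n > 2 * M"
    and j: "j < n" and k1: "M \<le> k" and k2: "k < n - M"
  shows "occ n t ((int j - int k) mod int n) - t (int j - int k) =
           - (of_int \<bar>int j - int k\<bar> * t (int j - int k) / of_nat n)"
proof -
  define d where "d = int j - int k"
  have n0: "(of_nat n :: complex) \<noteq> 0" using n by simp
  show ?thesis unfolding d_def[symmetric]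
  proof (cases "d \<ge> 0")
    case True
    have dm: "d mod int n = d" using True j unfolding d_def by (intro mod_pos_pos_trivial) auto
    have "\<bar>d - int n\<bar> > int M" using j k1 k2 unfolding d_def by auto
    then have "t (d - int n) = 0" using t by blast
    then have "occ n t (d mod int n) = of_int (int n - d) * t d / of_nat n" by (simp add: dm occ_def)
    then show "occ n t (d mod int n) - t d = - (of_int \<bar>d\<bar> * t d / of_nat n)"
      using True n0 by (simp add: field_simps)
  next
    case False
    have dm: "d mod int n = d + int n"
    proof -
      have "(d + int n) mod int n = d + int n" using False j k2 unfolding d_def by (intro mod_pos_pos_trivial) auto
      then show ?thesis by simp
    qed
    have "\<bar>d + int n\<bar> > int M" using j k1 k2 unfolding d_def by auto
    then have "t (d + int n) = 0" using t by blast
    then have "occ n t (d mod int n) = of_int (d + int n) * t d / of_nat n" by (simp add: dm occ_def)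
    then show "occ n t (d mod int n) - t d = - (of_int \<bar>d\<bar> * t d / of_nat n)"
      using False n0 by (simp add: field_simps)
  qed
qed

lemma circ_toep_decomp:
  assumes t: "\<And>d. \<bar>d\<bar> > int M \<Longrightarrow> t d = 0" and n: "n > 2 * M"
  shows "\<exists>R E. circ n t - toep n t = R + E \<and> LR n (2 * M) R \<and>
      bnd n E (\<Sum>d\<in>{-int M..int M}. cmod (t d) * \<bar>d\<bar> / n)"
proof -
  define S where "S = {k. k < n \<and> (k < M \<or> n - M \<le> k)}"
  define D where "D j k = occ n t ((int j - int k) mod int n) - t (int j - int k)" for j k
  define e where "e d = - (of_int \<bar>d\<bar> * t d / of_nat n)" for d
  define w :: "nat \<Rightarrow> complex" where "w k = (if k \<in> S then 0 else 1)" for k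
  define R where "R = mat n n (\<lambda>(j, k). if k \<in> S then D j k else 0)"
  define E where "E = mat n n (\<lambda>(j, k). w k * e (int j - int k))"
  have fS: "finite S" by (simp add: S_def)
  have cS: "card S \<le> 2 * M"
  proof -
    have "S \<subseteq> {..<M} \<union> {n - M..<n}" by (auto simp: S_def)
    then have "card S \<le> card ({..<M} \<union> {n - M..<n})" by (intro card_mono) auto
    also have "\<dots> \<le> card {..<M} + card {n - M..<n}" by (rule card_Un_le)
    also have "\<dots> = 2 * M" using n by simp
    finally show ?thesis .
  qed
  have LRR: "LR n (2 * M) R" unfolding R_def by (rule LR_mono[OF LR_mask[OF fS] cS])
  have e0: "e d = 0" if "\<bar>d\<bar> > int M" for d using t[OF that] by (simp add: e_def)
  have bE: "bnd n E (\<Sum>d\<in>{-int M..int M}. cmod (e d))" unfolding E_def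
    by (rule band_bnd[OF e0]) (auto simp: w_def)
  have "(\<Sum>d\<in>{-int M..int M}. cmod (e d)) = (\<Sum>d\<in>{-int M..int M}. cmod (t d) * \<bar>d\<bar> / n)"
    by (intro sum.cong) (auto simp: e_def norm_mult norm_divide)
  then have bE': "bnd n E (\<Sum>d\<in>{-int M..int M}. cmod (t d) * \<bar>d\<bar> / n)" using bE by simp
  have eq: "circ n t - toep n t = R + E"
  proof (rule eq_matI)
    fix j k assume jk: "j < dim_row (R + E)" "k < dim_col (R + E)"
    then have j: "j < n" and k: "k < n" by (auto simp: R_def E_def)
    show "(circ n t - toep n t) $$ (j, k) = (R + E) $$ (j, k)"
    proof (cases "k \<in> S")
      case True
      then show ?thesis using j k by (simp add: R_def E_def circ_def toep_def D_def w_def)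
    next
      case False
      then have "M \<le> k" "k < n - M" using k by (auto simp: S_def)
      from mid_entry[OF t n j this] show ?thesis using j k False
        by (simp add: R_def E_def circ_def toep_def D_def w_def e_def)
    qed
  qed (auto simp: R_def E_def circ_def toep_def)
  show ?thesis using eq LRR bE' by blast
qed

lemma rot_sum: fixes s n :: nat assumes "s \<le> n" shows "(\<Sum>j<n. \<phi> ((j + s) mod n)) = (\<Sum>i<n. \<phi> i)"
proof (rule sum.reindex_bij_witness[of _ "\<lambda>i. (i + (n - s)) mod n" "\<lambda>j. (j + s) mod n"])
  fix j assume j: "j \<in> {..<n}"
  have "((j + s) mod n + (n - s)) mod n = (j + s + (n - s)) mod n" by (simp add: mod_add_left_eq)
  also have "j + s + (n - s) = j + n" using assms by simp
  finally show "((j + s) mod n + (n - s)) mod n = j" using j by simp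
next
  fix i assume i: "i \<in> {..<n}"
  have "((i + (n - s)) mod n + s) mod n = (i + (n - s) + s) mod n" by (simp add: mod_add_left_eq)
  also have "i + (n - s) + s = i + n" using assms by simp
  finally show "((i + (n - s)) mod n + s) mod n = i" using i by simp
qed (use assms in auto)

lemma rot_inv: fixes s n k :: nat shows "s \<le> n \<Longrightarrow> k < n \<Longrightarrow> ((k + s) mod n + (n - s)) mod n = k"
proof -
  assume a: "s \<le> n" "k < n"
  have "((k + s) mod n + (n - s)) mod n = (k + s + (n - s)) mod n" by (simp add: mod_add_left_eq)
  also have "k + s + (n - s) = k + n" using a by simp
  finally show ?thesis using a by simp
qed

lemma occ_avg:
  assumes j: "j < n" and k: "k < n"
  shows "occ n t ((int j - int k) mod int n) = (\<Sum>s<n. t (int ((j + s) mod n) - int ((k + s) mod n))) / of_nat n"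
proof -
  have n: "n > 0" using j by simp
  define k0 where "k0 = (int j - int k) mod int n"
  have k0: "0 \<le> k0" "k0 < int n" using n by (auto simp: k0_def)
  define m where "m = nat k0"
  have m: "int m = k0" "m < n" using k0 by (auto simp: m_def)
  have "(\<Sum>s<n. t (int ((j + s) mod n) - int ((k + s) mod n))) = (\<Sum>u<n. t ((int u + k0) mod int n - int u))"
  proof (rule sum.reindex_bij_witness[of _ "\<lambda>u. (u + (n - k)) mod n" "\<lambda>s. (k + s) mod n"])
    fix s assume s: "s \<in> {..<n}"
    show "((k + s) mod n + (n - k)) mod n = s" using rot_inv[of k n s] k s by (simp add: add.commute)
    have "int ((j + s) mod n) = (int j + int s) mod int n" by (simp add: zmod_int)
    also have "\<dots> = (int k + int s + (int j - int k)) mod int n" by (rule arg_cong[where f="\<lambda>x. x mod int n"]) simp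
    also have "\<dots> = ((int k + int s) mod int n + k0) mod int n" unfolding k0_def by (simp add: mod_add_eq)
    also have "(int k + int s) mod int n = int ((k + s) mod n)" by (simp add: zmod_int)
    finally show "t ((int ((k + s) mod n) + k0) mod int n - int ((k + s) mod n)) = t (int ((j + s) mod n) - int ((k + s) mod n))"
      by simp
  next
    fix u assume u: "u \<in> {..<n}"
    have "(k + (u + (n - k)) mod n) mod n = (k + (u + (n - k))) mod n" by (simp add: mod_add_right_eq)
    also have "k + (u + (n - k)) = u + n" using k by simp
    finally show "(k + (u + (n - k)) mod n) mod n = u" using u by simp
  qed (use n in auto)
  also have "\<dots> = (\<Sum>u\<in>{..<n - m}. t k0) + (\<Sum>u\<in>{n - m..<n}. t (k0 - int n))"
  proof -
    have split: "{..<n} = {..<n - m} \<union> {n - m..<n}" by auto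
    have "(\<Sum>u<n. t ((int u + k0) mod int n - int u)) =
       (\<Sum>u\<in>{..<n - m}. t ((int u + k0) mod int n - int u)) + (\<Sum>u\<in>{n - m..<n}. t ((int u + k0) mod int n - int u))"
      by (subst split, rule sum.union_disjoint) auto
    moreover have "(\<Sum>u\<in>{..<n - m}. t ((int u + k0) mod int n - int u)) = (\<Sum>u\<in>{..<n - m}. t k0)"
    proof (rule sum.cong)
      fix u assume "u \<in> {..<n - m}"
      then have "(int u + k0) mod int n = int u + k0" using m k0 by (intro mod_pos_pos_trivial) auto
      then show "t ((int u + k0) mod int n - int u) = t k0" by simp
    qed simp
    moreover have "(\<Sum>u\<in>{n - m..<n}. t ((int u + k0) mod int n - int u)) = (\<Sum>u\<in>{n - m..<n}. t (k0 - int n))"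
    proof (rule sum.cong)
      fix u assume "u \<in> {n - m..<n}"
      then have "(int u + k0 - int n) mod int n = int u + k0 - int n" using m k0 by (intro mod_pos_pos_trivial) auto
      moreover have "(int u + k0) mod int n = (int u + k0 - int n) mod int n"
        using mod_add_self2[of "int u + k0 - int n" "int n"] by simp
      ultimately have "(int u + k0) mod int n = int u + k0 - int n" by (metis (no_types))
      then show "t ((int u + k0) mod int n - int u) = t (k0 - int n)" by simp
    qed simp
    ultimately show ?thesis by simp
  qed
  also have "\<dots> = of_int (int n - k0) * t k0 + of_int k0 * t (k0 - int n)"
    using m by (simp add: of_nat_diff m(1)[symmetric])
  finally show ?thesis unfolding k0_def[symmetric] occ_def using n by simp
qed

lemma circ_bnd: assumes T: "bnd n (toep n t) \<delta>" and n: "n > 0" shows "bnd n (circ n t) \<delta>"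
  unfolding circ_def
proof (rule bnd_matI)
  fix v :: "complex vec" assume v: "v \<in> carrier_vec n"
  have d0: "\<delta> \<ge> 0" using bnd_nonneg_carrier[OF bnd_carrier[OF T] T n] .
  define w where "w s j = (\<Sum>k<n. t (int ((j + s) mod n) - int ((k + s) mod n)) * v $ k)" for s j
  have avg: "(\<Sum>k<n. (case (j, k) of (j, k) \<Rightarrow> occ n t ((int j - int k) mod int n)) * v $ k) = (\<Sum>s<n. w s j) / of_nat n"
    if j: "j < n" for j
  proof -
    have "(\<Sum>k<n. (case (j, k) of (j, k) \<Rightarrow> occ n t ((int j - int k) mod int n)) * v $ k)
        = (\<Sum>k<n. (\<Sum>s<n. t (int ((j + s) mod n) - int ((k + s) mod n))) / of_nat n * v $ k)"
      using j by (intro sum.cong) (auto simp: occ_avg)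
    also have "\<dots> = (\<Sum>k<n. \<Sum>s<n. t (int ((j + s) mod n) - int ((k + s) mod n)) * v $ k) / of_nat n"
      by (simp add: sum_divide_distrib sum_distrib_right)
    also have "\<dots> = (\<Sum>s<n. w s j) / of_nat n" unfolding w_def by (subst sum.swap) simp
    finally show ?thesis .
  qed
  have ws: "L2_set (\<lambda>j. cmod (w s j)) {..<n} \<le> \<delta> * L2_set (\<lambda>k. cmod (v $ k)) {..<n}" if s: "s < n" for s
  proof -
    define v' where "v' = vec n (\<lambda>k'. v $ ((k' + (n - s)) mod n))"
    have v': "v' \<in> carrier_vec n" by (simp add: v'_def)
    have wT: "w s j = (toep n t *\<^sub>v v') $ ((j + s) mod n)" for j
    proof -
      have jn: "(j + s) mod n < n" using n by simp
      have "w s j = (\<Sum>k<n. (\<lambda>k'. t (int ((j + s) mod n) - int k') * v $ ((k' + (n - s)) mod n)) ((k + s) mod n))"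
        unfolding w_def using rot_inv[of s n] s by (intro sum.cong) auto
      also have "\<dots> = (\<Sum>k'<n. t (int ((j + s) mod n) - int k') * v $ ((k' + (n - s)) mod n))"
        using s by (intro rot_sum) auto
      also have "\<dots> = (toep n t *\<^sub>v v') $ ((j + s) mod n)"
        unfolding toep_def by (subst mat_vec_index[OF v' jn]) (auto simp: v'_def intro!: sum.cong)
      finally show ?thesis .
    qed
    have "L2_set (\<lambda>j. cmod (w s j)) {..<n} = L2_set (\<lambda>i. cmod ((toep n t *\<^sub>v v') $ i)) {..<n}"
      unfolding L2_set_def wT using s by (subst rot_sum[where \<phi>="\<lambda>i. (cmod ((toep n t *\<^sub>v v') $ i))\<^sup>2"]) auto
    also have "\<dots> = vec_norm2 (toep n t *\<^sub>v v')" unfolding vn_L2 by (simp add: toep_def)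
    also have "\<dots> \<le> \<delta> * vec_norm2 v'" by (rule bndD[OF T v'])
    also have "vec_norm2 v' = L2_set (\<lambda>k. cmod (v $ k)) {..<n}"
    proof -
      have "vec_norm2 v' = L2_set (\<lambda>k. cmod (v $ ((k + (n - s)) mod n))) {..<n}"
        unfolding vn_L2 by (intro L2_set_cong) (auto simp: v'_def)
      also have "\<dots> = L2_set (\<lambda>k. cmod (v $ k)) {..<n}"
        unfolding L2_set_def by (subst rot_sum[where \<phi>="\<lambda>i. (cmod (v $ i))\<^sup>2"]) auto
      finally show ?thesis .
    qed
    finally show ?thesis .
  qed
  have "L2_set (\<lambda>j. cmod (\<Sum>k<n. (case (j, k) of (j, k) \<Rightarrow> occ n t ((int j - int k) mod int n)) * v $ k)) {..<n}
      = L2_set (\<lambda>j. cmod (inverse (of_nat n) * (\<Sum>s<n. w s j))) {..<n}"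
    using avg by (intro L2_set_cong) (auto simp: divide_inverse mult.commute)
  also have "\<dots> = inverse (real n) * L2_set (\<lambda>j. cmod (\<Sum>s<n. w s j)) {..<n}"
    unfolding L2_scale by (simp add: norm_inverse)
  also have "\<dots> \<le> inverse (real n) * (\<Sum>s<n. L2_set (\<lambda>j. cmod (w s j)) {..<n})"
    by (intro mult_left_mono L2_sum) auto
  also have "\<dots> \<le> inverse (real n) * (\<Sum>s<n. \<delta> * L2_set (\<lambda>k. cmod (v $ k)) {..<n})"
    by (intro mult_left_mono sum_mono ws) auto
  also have "\<dots> = \<delta> * L2_set (\<lambda>k. cmod (v $ k)) {..<n}" using n by simp
  finally show "L2_set (\<lambda>j. cmod (\<Sum>k<n. (case (j, k) of (j, k) \<Rightarrow> occ n t ((int j - int k) mod int n)) * v $ k)) {..<n}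
      \<le> \<delta> * L2_set (\<lambda>k. cmod (v $ k)) {..<n}" .
qed

definition ex :: "int \<Rightarrow> real \<Rightarrow> complex" where "ex k \<theta> = exp (\<i> * of_int k * of_real \<theta>)"

lemma cont_ex [continuous_intros]: "continuous_on S (ex k)"
  unfolding ex_def by (intro continuous_intros)

lemma ex_mult: "ex a \<theta> * ex b \<theta> = ex (a + b) \<theta>"
  by (simp add: ex_def exp_add[symmetric] algebra_simps)

lemma ex_mult_diff: "ex a \<theta> * ex (- b) \<theta> = ex (a - b) \<theta>"
  by (simp add: ex_mult)

lemma cnj_ex: "cnj (ex a \<theta>) = ex (- a) \<theta>"
  by (simp add: ex_def exp_cnj)

lemma norm_ex: "cmod (ex a \<theta>) = 1"
  unfolding ex_def by (simp add: norm_exp_i_times[of "of_int a * \<theta>", simplified] mult.assoc)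

lemma integrable_ex: "ex k integrable_on {-pi..pi}"
  by (intro integrable_continuous_interval cont_ex)

lemma exp_int_pi: "exp (\<i> * of_int m * of_real pi) = exp (- (\<i> * of_int m * of_real pi))"
proof -
  have s: "sin (real_of_int m * pi) = 0" by (simp add: sin_times_pi_eq_0)
  have "exp (\<i> * of_int m * of_real pi) = cis (real_of_int m * pi)" by (simp add: cis_conv_exp mult.assoc)
  also have "\<dots> = of_real (cos (real_of_int m * pi))" using s by (simp add: complex_eq_iff)
  also have "\<dots> = cis (- (real_of_int m * pi))" using s by (simp add: complex_eq_iff)
  also have "\<dots> = exp (- (\<i> * of_int m * of_real pi))" by (simp add: cis_conv_exp mult.assoc)
  finally show ?thesis .
qed

lemma integral_ex: "integral {-pi..pi} (ex m) = (if m = 0 then of_real (2 * pi) else 0)"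
proof (cases "m = 0")
  case True
  have "ex 0 = (\<lambda>_. 1)" by (auto simp: ex_def fun_eq_iff)
  then show ?thesis using True by (simp add: scaleR_conv_of_real)
next
  case False
  define a where "a = \<i> * of_int m"
  have a: "a \<noteq> 0" using False by (simp add: a_def)
  have "\<And>t. t \<in> {-pi..pi} \<Longrightarrow> ((\<lambda>x. exp (a * x) / a) has_vector_derivative exp (a * t)) (at t within {-pi..pi})"
    using a by (intro derivative_eq_intros has_complex_derivative_imp_has_vector_derivative [unfolded o_def] | simp)+
  then have "((\<lambda>t. exp (a * of_real t)) has_integral exp (a * of_real pi) / a - exp (a * of_real (-pi)) / a) {-pi..pi}"
    by (intro fundamental_theorem_of_calculus) auto
  moreover have "exp (a * of_real pi) = exp (a * of_real (-pi))"
    using exp_int_pi[of m] by (simp add: a_def)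
  ultimately have "((\<lambda>t. exp (a * of_real t)) has_integral 0) {-pi..pi}" by simp
  then have "(ex m has_integral 0) {-pi..pi}" by (simp add: ex_def[abs_def] a_def)
  then show ?thesis using False by (simp add: integral_unique)
qed

lemma integral_of_real_fun:
  assumes "f integrable_on S"
  shows "integral S (\<lambda>x. complex_of_real (f x)) = of_real (integral S f)"
  using has_integral_of_real[OF integrable_integral[OF assms]] by (rule integral_unique)

lemma parseval:
  fixes c :: "nat \<Rightarrow> complex"
  shows "integral {-pi..pi} (\<lambda>\<theta>. (cmod (\<Sum>k<n. c k * ex (int k) \<theta>))\<^sup>2) = 2 * pi * (\<Sum>k<n. (cmod (c k))\<^sup>2)"
proof -
  define W where "W \<theta> = (\<Sum>k<n. c k * ex (int k) \<theta>)" for \<theta>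
  have pt: "of_real ((cmod (W \<theta>))\<^sup>2) = (\<Sum>k<n. \<Sum>l<n. (c k * cnj (c l)) * ex (int k - int l) \<theta>)" for \<theta>
  proof -
    have "of_real ((cmod (W \<theta>))\<^sup>2) = W \<theta> * cnj (W \<theta>)" by (rule complex_norm_square)
    also have "\<dots> = (\<Sum>k<n. c k * ex (int k) \<theta>) * (\<Sum>l<n. cnj (c l) * ex (- int l) \<theta>)"
      by (simp add: W_def cnj_ex)
    also have "\<dots> = (\<Sum>k<n. \<Sum>l<n. (c k * ex (int k) \<theta>) * (cnj (c l) * ex (- int l) \<theta>))"
      by (rule sum_product)
    also have "\<dots> = (\<Sum>k<n. \<Sum>l<n. (c k * cnj (c l)) * ex (int k - int l) \<theta>)"
    proof (intro sum.cong refl)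
      fix k l
      show "(c k * ex (int k) \<theta>) * (cnj (c l) * ex (- int l) \<theta>) = (c k * cnj (c l)) * ex (int k - int l) \<theta>"
        using ex_mult_diff[of "int k" \<theta> "int l"] by (simp add: mult_ac)
    qed
    finally show ?thesis .
  qed
  have cW: "continuous_on {-pi..pi} W" unfolding W_def by (intro continuous_intros)
  have "of_real (integral {-pi..pi} (\<lambda>\<theta>. (cmod (W \<theta>))\<^sup>2)) = integral {-pi..pi} (\<lambda>\<theta>. of_real ((cmod (W \<theta>))\<^sup>2) :: complex)"
    by (rule integral_of_real_fun[symmetric], intro integrable_continuous_interval continuous_intros cW)
  also have "\<dots> = integral {-pi..pi} (\<lambda>\<theta>. \<Sum>k<n. \<Sum>l<n. (c k * cnj (c l)) * ex (int k - int l) \<theta>)"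
    by (simp only: pt)
  also have "\<dots> = (\<Sum>k<n. \<Sum>l<n. (c k * cnj (c l)) * integral {-pi..pi} (ex (int k - int l)))"
    by (simp add: integral_sum integrable_ex integrable_on_mult_right integrable_sum)
  also have "\<dots> = (\<Sum>k<n. \<Sum>l<n. if l = k then (c k * cnj (c l)) * of_real (2 * pi) else 0)"
    by (intro sum.cong refl) (auto simp: integral_ex)
  also have "\<dots> = (\<Sum>k<n. of_real ((cmod (c k))\<^sup>2) * of_real (2 * pi))"
    by (simp add: complex_norm_square[symmetric])
  also have "\<dots> = of_real (2 * pi * (\<Sum>k<n. (cmod (c k))\<^sup>2))"
    by (simp add: sum_distrib_left mult_ac)
  finally show ?thesis unfolding W_def of_real_eq_iff .
qed

lemma amgm_trick:
  fixes S A :: real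
  assumes S: "S \<ge> 0" and A: "A \<ge> 0" and H: "\<And>t. t > 0 \<Longrightarrow> S \<le> (t * A + S / t) / 2"
  shows "S \<le> A"
proof (cases "S = 0")
  case True then show ?thesis using A by simp
next
  case False
  then have S0: "S > 0" using S by simp
  show ?thesis
  proof (cases "A = 0")
    case True
    have "S \<le> (1 * A + S / 1) / 2" using H[of 1] by simp
    then show ?thesis using True S0 by simp
  next
    case False
    then have A0: "A > 0" using A by simp
    have "S \<le> (S / A * A + S / (S / A)) / 2" using H[of "S / A"] S0 A0 by simp
    also have "\<dots> = (S + A) / 2" using S0 A0 by (simp add: field_simps)
    finally show ?thesis by simp
  qed
qed

lemma amgm2: fixes a b t :: real assumes "t > 0" shows "a * b \<le> (t * a\<^sup>2 + b\<^sup>2 / t) / 2"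
proof -
  have "0 \<le> (t * a - b)\<^sup>2" by simp
  then have "2 * t * (a * b) \<le> t\<^sup>2 * a\<^sup>2 + b\<^sup>2" by (simp add: power2_eq_square algebra_simps)
  then have "2 * t * (a * b) / t \<le> (t\<^sup>2 * a\<^sup>2 + b\<^sup>2) / t" using assms by (intro divide_right_mono) auto
  then show ?thesis using assms by (simp add: field_simps power2_eq_square)
qed

lemma toep_bnd:
  assumes g: "continuous_on {-pi..pi} g" and gb: "\<And>\<theta>. \<theta> \<in> {-pi..pi} \<Longrightarrow> cmod (g \<theta>) \<le> \<delta>"
  shows "bnd n (toep n (fourier_coeff g)) \<delta>"
  unfolding toep_def
proof (rule bnd_matI)
  fix v :: "complex vec" assume v: "v \<in> carrier_vec n"
  have "(0::real) \<in> {-pi..pi}" using pi_gt_zero by simp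
  then have "cmod (g 0) \<le> \<delta>" by (rule gb)
  then have d0: "\<delta> \<ge> 0" using norm_ge_zero order.trans by blast
  define c where "c k = v $ k" for k
  define V where "V \<theta> = (\<Sum>k<n. c k * ex (int k) \<theta>)" for \<theta>
  define h where "h \<theta> = g \<theta> * V \<theta>" for \<theta>
  define u where "u j = (\<Sum>k<n. fourier_coeff g (int j - int k) * c k)" for j
  define U where "U \<theta> = (\<Sum>j<n. u j * ex (int j) \<theta>)" for \<theta>
  define S where "S = (\<Sum>j<n. (cmod (u j))\<^sup>2)"
  define P where "P = (\<Sum>k<n. (cmod (c k))\<^sup>2)"
  define I where "I = {-pi..pi}"
  have cV: "continuous_on I V" unfolding V_def by (intro continuous_intros)
  have cU: "continuous_on I U" unfolding U_def by (intro continuous_intros)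
  have cg: "continuous_on I g" using g by (simp add: I_def)
  have ch: "continuous_on I h" unfolding h_def by (intro continuous_intros cg cV)
  have pi0: "pi > 0" by (rule pi_gt_zero)
  have u_int: "u j = integral I (\<lambda>\<theta>. h \<theta> * ex (- int j) \<theta>) / of_real (2 * pi)" for j
  proof -
    have fc: "fourier_coeff g (int j - int k) = integral I (\<lambda>\<theta>. g \<theta> * ex (- int j) \<theta> * ex (int k) \<theta>) / of_real (2 * pi)" for k
    proof -
      have "(\<lambda>\<theta>. g \<theta> * exp (- \<i> * of_int (int j - int k) * of_real \<theta>)) = (\<lambda>\<theta>. g \<theta> * ex (- int j) \<theta> * ex (int k) \<theta>)"
      proof
        fix \<theta>
        have "g \<theta> * ex (- int j) \<theta> * ex (int k) \<theta> = g \<theta> * ex (- int j + int k) \<theta>"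
          by (simp add: mult.assoc ex_mult)
        also have "ex (- int j + int k) \<theta> = exp (- \<i> * of_int (int j - int k) * of_real \<theta>)"
          unfolding ex_def by (rule arg_cong[where f=exp]) (simp add: algebra_simps)
        finally show "g \<theta> * exp (- \<i> * of_int (int j - int k) * of_real \<theta>) = g \<theta> * ex (- int j) \<theta> * ex (int k) \<theta>"
          by (rule sym)
      qed
      then show ?thesis by (simp add: fourier_coeff_def I_def)
    qed
    have "u j = (\<Sum>k<n. integral I (\<lambda>\<theta>. g \<theta> * ex (- int j) \<theta> * ex (int k) \<theta> * c k)) / of_real (2 * pi)"
      unfolding u_def fc by (simp add: sum_divide_distrib)
    also have "(\<Sum>k<n. integral I (\<lambda>\<theta>. g \<theta> * ex (- int j) \<theta> * ex (int k) \<theta> * c k)) =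
        integral I (\<lambda>\<theta>. \<Sum>k<n. g \<theta> * ex (- int j) \<theta> * ex (int k) \<theta> * c k)"
      by (rule integral_sum[symmetric]) (auto simp: I_def intro!: integrable_continuous_interval continuous_intros g)
    also have "(\<lambda>\<theta>. \<Sum>k<n. g \<theta> * ex (- int j) \<theta> * ex (int k) \<theta> * c k) = (\<lambda>\<theta>. h \<theta> * ex (- int j) \<theta>)"
      by (auto simp: fun_eq_iff h_def V_def sum_distrib_left sum_distrib_right mult_ac)
    finally show ?thesis .
  qed
  have S_int: "of_real S = integral I (\<lambda>\<theta>. h \<theta> * cnj (U \<theta>)) / of_real (2 * pi)"
  proof -
    have "of_real S = (\<Sum>j<n. u j * cnj (u j))" unfolding S_def of_real_sum by (simp only: complex_norm_square)
    also have "\<dots> = (\<Sum>j<n. integral I (\<lambda>\<theta>. h \<theta> * ex (- int j) \<theta> * cnj (u j))) / of_real (2 * pi)"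
      by (simp add: u_int sum_divide_distrib)
    also have "(\<Sum>j<n. integral I (\<lambda>\<theta>. h \<theta> * ex (- int j) \<theta> * cnj (u j))) =
        integral I (\<lambda>\<theta>. \<Sum>j<n. h \<theta> * ex (- int j) \<theta> * cnj (u j))"
      by (rule integral_sum[symmetric]) (auto simp: I_def intro!: integrable_continuous_interval continuous_intros ch[unfolded I_def])
    also have "(\<lambda>\<theta>. \<Sum>j<n. h \<theta> * ex (- int j) \<theta> * cnj (u j)) = (\<lambda>\<theta>. h \<theta> * cnj (U \<theta>))"
      by (auto simp: fun_eq_iff U_def cnj_ex sum_distrib_left mult_ac)
    finally show ?thesis .
  qed
  have intU: "integral I (\<lambda>\<theta>. (cmod (U \<theta>))\<^sup>2) = 2 * pi * S"
    unfolding U_def S_def I_def by (rule parseval)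
  have intV: "integral I (\<lambda>\<theta>. (cmod (V \<theta>))\<^sup>2) = 2 * pi * P"
    unfolding V_def P_def I_def by (rule parseval)
  have inth: "integral I (\<lambda>\<theta>. (cmod (h \<theta>))\<^sup>2) \<le> \<delta>\<^sup>2 * (2 * pi * P)"
  proof -
    have "integral I (\<lambda>\<theta>. (cmod (h \<theta>))\<^sup>2) \<le> integral I (\<lambda>\<theta>. \<delta>\<^sup>2 * (cmod (V \<theta>))\<^sup>2)"
    proof (rule integral_le)
      show "(\<lambda>\<theta>. (cmod (h \<theta>))\<^sup>2) integrable_on I" unfolding I_def
        by (intro integrable_continuous_interval continuous_intros ch[unfolded I_def])
      show "(\<lambda>\<theta>. \<delta>\<^sup>2 * (cmod (V \<theta>))\<^sup>2) integrable_on I" unfolding I_def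
        by (intro integrable_continuous_interval continuous_intros cV[unfolded I_def])
      fix \<theta> assume "\<theta> \<in> I"
      then have "cmod (g \<theta>) \<le> \<delta>" using gb by (simp add: I_def)
      then have "cmod (h \<theta>) \<le> \<delta> * cmod (V \<theta>)" unfolding h_def norm_mult
        by (intro mult_right_mono) auto
      then have "(cmod (h \<theta>))\<^sup>2 \<le> (\<delta> * cmod (V \<theta>))\<^sup>2" by (intro power_mono) auto
      then show "(cmod (h \<theta>))\<^sup>2 \<le> \<delta>\<^sup>2 * (cmod (V \<theta>))\<^sup>2" by (simp add: power_mult_distrib)
    qed
    also have "\<dots> = \<delta>\<^sup>2 * (2 * pi * P)" using intV by simp
    finally show ?thesis .
  qed
  have S0: "S \<ge> 0" by (simp add: S_def sum_nonneg)
  have P0: "P \<ge> 0" by (simp add: P_def sum_nonneg)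
  have key: "S \<le> (t * (\<delta>\<^sup>2 * P) + S / t) / 2" if t: "t > 0" for t
  proof -
    have "S = cmod (of_real S :: complex)" using S0 by simp
    also have "\<dots> = cmod (integral I (\<lambda>\<theta>. h \<theta> * cnj (U \<theta>))) / (2 * pi)"
      unfolding S_int using pi0 by (simp add: norm_divide)
    also have "cmod (integral I (\<lambda>\<theta>. h \<theta> * cnj (U \<theta>))) \<le>
        integral I (\<lambda>\<theta>. (t * (cmod (h \<theta>))\<^sup>2 + (cmod (U \<theta>))\<^sup>2 / t) / 2)"
    proof (rule integral_norm_bound_integral)
      show "(\<lambda>\<theta>. h \<theta> * cnj (U \<theta>)) integrable_on I" unfolding I_def
        by (intro integrable_continuous_interval continuous_intros ch[unfolded I_def] cU[unfolded I_def])
      show "(\<lambda>\<theta>. (t * (cmod (h \<theta>))\<^sup>2 + (cmod (U \<theta>))\<^sup>2 / t) / 2) integrable_on I" unfolding I_def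
        by (intro integrable_continuous_interval continuous_intros ch[unfolded I_def] cU[unfolded I_def]) (use t in auto)
      fix \<theta> show "cmod (h \<theta> * cnj (U \<theta>)) \<le> (t * (cmod (h \<theta>))\<^sup>2 + (cmod (U \<theta>))\<^sup>2 / t) / 2"
        unfolding norm_mult complex_mod_cnj by (rule amgm2[OF t])
    qed
    also have "integral I (\<lambda>\<theta>. (t * (cmod (h \<theta>))\<^sup>2 + (cmod (U \<theta>))\<^sup>2 / t) / 2) =
        (t * integral I (\<lambda>\<theta>. (cmod (h \<theta>))\<^sup>2) + integral I (\<lambda>\<theta>. (cmod (U \<theta>))\<^sup>2) / t) / 2"
    proof -
      have i1: "(\<lambda>\<theta>. (cmod (h \<theta>))\<^sup>2) integrable_on I" unfolding I_def
        by (intro integrable_continuous_interval continuous_intros ch[unfolded I_def])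
      have i2: "(\<lambda>\<theta>. (cmod (U \<theta>))\<^sup>2) integrable_on I" unfolding I_def
        by (intro integrable_continuous_interval continuous_intros cU[unfolded I_def])
      have "integral I (\<lambda>\<theta>. (t * (cmod (h \<theta>))\<^sup>2 + (cmod (U \<theta>))\<^sup>2 / t) / 2) =
          integral I (\<lambda>\<theta>. t * (cmod (h \<theta>))\<^sup>2 + (cmod (U \<theta>))\<^sup>2 / t) / 2" by simp
      also have "integral I (\<lambda>\<theta>. t * (cmod (h \<theta>))\<^sup>2 + (cmod (U \<theta>))\<^sup>2 / t) =
          integral I (\<lambda>\<theta>. t * (cmod (h \<theta>))\<^sup>2) + integral I (\<lambda>\<theta>. (cmod (U \<theta>))\<^sup>2 / t)"
        by (rule integral_add) (use i1 i2 in \<open>auto intro: integrable_on_mult_right integrable_on_divide\<close>)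
      finally show ?thesis by simp
    qed
    finally have "S \<le> (t * integral I (\<lambda>\<theta>. (cmod (h \<theta>))\<^sup>2) + integral I (\<lambda>\<theta>. (cmod (U \<theta>))\<^sup>2) / t) / 2 / (2 * pi)"
      using pi0 by (simp add: divide_right_mono)
    also have "\<dots> \<le> (t * (\<delta>\<^sup>2 * (2 * pi * P)) + 2 * pi * S / t) / 2 / (2 * pi)"
      unfolding intU using inth t pi0 by (intro divide_right_mono add_right_mono mult_left_mono) auto
    also have "\<dots> = (t * (\<delta>\<^sup>2 * P) + S / t) / 2" using pi0 by (simp add: field_simps)
    finally show ?thesis .
  qed
  have "S \<le> \<delta>\<^sup>2 * P" by (rule amgm_trick[OF S0 _ key]) (use P0 in simp)
  then have "sqrt S \<le> sqrt (\<delta>\<^sup>2 * P)" by (rule real_sqrt_le_mono)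
  also have "\<dots> = \<delta> * sqrt P" using d0 by (simp add: real_sqrt_mult)
  finally have "sqrt S \<le> \<delta> * sqrt P" .
  then show "L2_set (\<lambda>j. cmod (\<Sum>k<n. (case (j, k) of (j, k) \<Rightarrow> fourier_coeff g (int j - int k)) * v $ k)) {..<n}
       \<le> \<delta> * L2_set (\<lambda>k. cmod (v $ k)) {..<n}"
    by (simp add: L2_set_def S_def P_def u_def c_def)
qed

definition trigs :: "(complex \<times> int) list \<Rightarrow> real \<Rightarrow> complex" where
  "trigs F \<theta> = sum_list (map (\<lambda>(b, k). b * ex k \<theta>) F)"

definition trig :: "(real \<Rightarrow> complex) \<Rightarrow> bool" where
  "trig q \<longleftrightarrow> (\<exists>F. \<forall>\<theta>. q \<theta> = trigs F \<theta>)"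

lemma sum_list_prod:
  fixes f g :: "'a \<Rightarrow> 'b::comm_ring"
  shows "sum_list (map f xs) * sum_list (map g ys) = sum_list [f x * g y. x \<leftarrow> xs, y \<leftarrow> ys]"
  by (induction xs) (simp_all add: algebra_simps sum_list_const_mult)

lemma trig_const: "trig (\<lambda>\<theta>. c)"
  unfolding trig_def by (rule exI[of _ "[(c, 0)]"]) (simp add: trigs_def ex_def)

lemma trig_ex: "trig (ex k)"
  unfolding trig_def by (rule exI[of _ "[(1, k)]"]) (simp add: trigs_def)

lemma trig_add: "trig p \<Longrightarrow> trig q \<Longrightarrow> trig (\<lambda>\<theta>. p \<theta> + q \<theta>)"
proof -
  assume "trig p" "trig q"
  then obtain F G where F: "\<And>\<theta>. p \<theta> = trigs F \<theta>" and G: "\<And>\<theta>. q \<theta> = trigs G \<theta>" by (auto simp: trig_def)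
  have "p \<theta> + q \<theta> = trigs (F @ G) \<theta>" for \<theta> by (simp add: F G trigs_def)
  then show ?thesis unfolding trig_def by blast
qed

lemma trig_mult: "trig p \<Longrightarrow> trig q \<Longrightarrow> trig (\<lambda>\<theta>. p \<theta> * q \<theta>)"
proof -
  assume "trig p" "trig q"
  then obtain F G where F: "\<And>\<theta>. p \<theta> = trigs F \<theta>" and G: "\<And>\<theta>. q \<theta> = trigs G \<theta>" by (auto simp: trig_def)
  define H where "H = [(fst x * fst y, snd x + snd y). x \<leftarrow> F, y \<leftarrow> G]"
  have "p \<theta> * q \<theta> = trigs H \<theta>" for \<theta>
  proof -
    have "p \<theta> * q \<theta> = sum_list [(case x of (b, k) \<Rightarrow> b * ex k \<theta>) * (case y of (b, k) \<Rightarrow> b * ex k \<theta>). x \<leftarrow> F, y \<leftarrow> G]"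
      unfolding F G trigs_def by (rule sum_list_prod)
    also have "\<dots> = trigs H \<theta>"
    proof -
      have tw: "(case x of (b, k) \<Rightarrow> b * ex k \<theta>) * (case y of (b, k) \<Rightarrow> b * ex k \<theta>) =
          (case (fst x * fst y, snd x + snd y) of (b, k) \<Rightarrow> b * ex k \<theta>)" for x y :: "complex \<times> int"
        by (cases x, cases y) (simp add: ex_mult[symmetric] mult_ac)
      show ?thesis unfolding trigs_def H_def by (simp only: map_concat map_map o_def tw)
    qed
    finally show ?thesis .
  qed
  then show ?thesis unfolding trig_def by blast
qed

lemma trig_cos: "trig (\<lambda>\<theta>. complex_of_real (cos \<theta>))"
proof -
  have "(\<lambda>\<theta>. complex_of_real (cos \<theta>)) = (\<lambda>\<theta>. (1/2) * ex 1 \<theta> + (1/2) * ex (-1) \<theta>)"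
    unfolding cos_of_real[symmetric] cos_exp_eq by (simp add: ex_def field_simps)
  note eq = this
  show ?thesis unfolding eq by (intro trig_add trig_mult trig_const trig_ex)
qed

lemma trig_sin: "trig (\<lambda>\<theta>. complex_of_real (sin \<theta>))"
proof -
  have "(\<lambda>\<theta>. complex_of_real (sin \<theta>)) = (\<lambda>\<theta>. (1 / (2 * \<i>)) * ex 1 \<theta> + (- 1 / (2 * \<i>)) * ex (-1) \<theta>)"
    unfolding sin_of_real[symmetric] sin_exp_eq by (simp add: ex_def field_simps)
  note eq = this
  show ?thesis unfolding eq by (intro trig_add trig_mult trig_const trig_ex)
qed

lemma trig_rpf: "real_polynomial_function r \<Longrightarrow> trig (\<lambda>\<theta>. complex_of_real (r (cis \<theta>)))"
proof (induction rule: real_polynomial_function.induct)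
  case (linear r)
  then interpret bounded_linear r .
  have rz: "r z = Re z * r 1 + Im z * r \<i>" for z
  proof -
    have zeq: "z = Re z *\<^sub>R 1 + Im z *\<^sub>R \<i>" by (simp add: complex_eq_iff)
    have "r z = r (Re z *\<^sub>R 1 + Im z *\<^sub>R \<i>)" by (rule arg_cong[where f=r, OF zeq])
    also have "\<dots> = Re z * r 1 + Im z * r \<i>" by (simp add: add scaleR)
    finally show ?thesis .
  qed
  have e: "complex_of_real (r (cis \<theta>)) = complex_of_real (cos \<theta>) * of_real (r 1) + complex_of_real (sin \<theta>) * of_real (r \<i>)" for \<theta>
    using rz[of "cis \<theta>"] by simp
  show ?case unfolding e
    by (intro trig_add trig_mult trig_cos trig_sin trig_const)
next
  case (const c) then show ?case by (rule trig_const)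
next
  case (add f g) then show ?case by (simp add: trig_add)
next
  case (mult f g) then show ?case by (simp add: trig_mult)
qed

lemma trig_poly: assumes "polynomial_function p" shows "trig (\<lambda>\<theta>. p (cis \<theta>))"
proof -
  have re: "real_polynomial_function (Re \<circ> p)" using assms bounded_linear_Re unfolding polynomial_function_def by blast
  have im: "real_polynomial_function (Im \<circ> p)" using assms bounded_linear_Im unfolding polynomial_function_def by blast
  have "(\<lambda>\<theta>. p (cis \<theta>)) = (\<lambda>\<theta>. complex_of_real ((Re \<circ> p) (cis \<theta>)) + \<i> * complex_of_real ((Im \<circ> p) (cis \<theta>)))"
    by (simp add: complex_eq_iff fun_eq_iff)
  note eq = this
  show ?thesis unfolding eq by (intro trig_add trig_mult trig_const trig_rpf re im)
qed

lemma trigs_Cons: "trigs ((b, k) # F) \<theta> = b * ex k \<theta> + trigs F \<theta>"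
  by (simp add: trigs_def)

lemma cont_trigs: "continuous_on S (trigs F)"
proof (induction F)
  case Nil
  have "trigs [] = (\<lambda>_. 0)" by (auto simp: trigs_def fun_eq_iff)
  then show ?case by simp
next
  case (Cons x F)
  obtain b k where x: "x = (b, k)" by (cases x)
  have "trigs (x # F) = (\<lambda>\<theta>. b * ex k \<theta> + trigs F \<theta>)" by (auto simp: x trigs_Cons fun_eq_iff)
  then show ?case using Cons by (auto intro!: continuous_intros)
qed

lemma fourier_ex: "fourier_coeff f m = integral {-pi..pi} (\<lambda>\<theta>. f \<theta> * ex (- m) \<theta>) / of_real (2 * pi)"
  unfolding fourier_coeff_def ex_def by simp

lemma trigs_coeff0: "(\<forall>x\<in>set F. snd x \<noteq> m) \<Longrightarrow> integral {-pi..pi} (\<lambda>\<theta>. trigs F \<theta> * ex (- m) \<theta>) = 0"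
proof (induction F)
  case Nil then show ?case by (simp add: trigs_def)
next
  case (Cons x F)
  obtain b k where x: "x = (b, k)" by (cases x)
  have km: "k \<noteq> m" using Cons.prems x by auto
  have "integral {-pi..pi} (\<lambda>\<theta>. trigs (x # F) \<theta> * ex (- m) \<theta>) =
     integral {-pi..pi} (\<lambda>\<theta>. b * ex (k - m) \<theta> + trigs F \<theta> * ex (- m) \<theta>)"
    by (rule arg_cong[where f="integral _"]) (auto simp: x trigs_Cons fun_eq_iff algebra_simps ex_mult_diff)
  also have "\<dots> = integral {-pi..pi} (\<lambda>\<theta>. b * ex (k - m) \<theta>) + integral {-pi..pi} (\<lambda>\<theta>. trigs F \<theta> * ex (- m) \<theta>)"
    by (rule integral_add) (auto intro!: integrable_continuous_interval continuous_intros cont_trigs)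
  also have "\<dots> = 0" using Cons km by (simp add: integral_ex)
  finally show ?case .
qed

lemma trigs_fourier0: "(\<forall>x\<in>set F. snd x \<noteq> m) \<Longrightarrow> fourier_coeff (trigs F) m = 0"
  by (simp add: fourier_ex trigs_coeff0)

lemma f_Arg_minus:
  assumes per: "\<And>x. f (x + 2 * pi) = f x" and w: "w \<noteq> 0"
  shows "f (Arg w) = f (Arg (- w) + pi)"
  using per[of "Arg w"] by (simp add: Arg_minus[OF w] algebra_simps)

lemma cont_f_Arg:
  assumes cont: "continuous_on UNIV f" and per: "\<And>x. f (x + 2 * pi) = f x"
  shows "continuous_on (sphere 0 1) (\<lambda>z. f (Arg z))"
proof -
  have cf: "continuous (at x within S) f" for x S
  proof -
    have "isCont f x" using cont by (simp add: continuous_on_eq_continuous_at)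
    then show ?thesis by (rule continuous_at_imp_continuous_within)
  qed
  have "continuous (at z within sphere 0 1) (\<lambda>z. f (Arg z))" if z: "z \<in> sphere 0 1" for z
  proof (cases "z \<in> \<real>\<^sub>\<le>\<^sub>0")
    case False
    then show ?thesis
      by (intro continuous_within_compose2[OF continuous_within_Arg[OF False] cf])
  next
    case True
    have z0: "z \<noteq> 0" using z by auto
    have "- z \<notin> \<real>\<^sub>\<le>\<^sub>0" using True z0
      by (auto simp: complex_nonpos_Reals_iff complex_eq_iff)
    then have nz: "- z \<notin> \<real>\<^sub>\<le>\<^sub>0" .
    have "continuous (at z within sphere 0 1) (\<lambda>w. - w)" by (intro continuous_intros)
    moreover have "continuous (at (- z) within uminus ` sphere 0 1) Arg" by (rule continuous_within_Arg[OF nz])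
    ultimately have "continuous (at z within sphere 0 1) (\<lambda>w. Arg (- w))"
      by (rule continuous_within_compose2[where f="\<lambda>w. - w" and g=Arg])
    then have c: "continuous (at z within sphere 0 1) (\<lambda>w. f (Arg (- w) + pi))"
      by (intro continuous_within_compose2[OF _ cf] continuous_intros)
    show ?thesis
    proof (rule continuous_transform_within[OF c, of 1])
      fix w assume "w \<in> sphere 0 1" "dist w z < 1"
      then have "w \<noteq> 0" by auto
      then show "f (Arg (- w) + pi) = f (Arg w)" using f_Arg_minus[where f=f, OF per] by metis
    qed (use z in auto)
  qed
  then show ?thesis by (simp add: continuous_on_eq_continuous_within)
qed

lemma f_cis:
  assumes per: "\<And>x. f (x + 2 * pi) = f x" and th: "\<theta> \<in> {-pi..pi}"
  shows "f \<theta> = f (Arg (cis \<theta>))"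
proof (cases "\<theta> = - pi")
  case True
  have "cis (- pi) = cis pi" by (simp add: complex_eq_iff)
  then have "Arg (cis \<theta>) = pi" using True Arg_cis[of pi] by simp
  then show ?thesis using True per[of "- pi"] by simp
next
  case False
  then have "\<theta> \<in> {-pi<..pi}" using th by auto
  then show ?thesis by (simp add: Arg_cis)
qed

lemma trig_approx:
  assumes cont: "continuous_on UNIV f" and per: "\<And>x. f (x + 2 * pi) = f x" and e: "e > 0"
  shows "\<exists>F. \<forall>\<theta>\<in>{-pi..pi}. cmod (f \<theta> - trigs F \<theta>) < e"
proof -
  obtain p where p: "polynomial_function p" "\<And>z. z \<in> sphere 0 1 \<Longrightarrow> norm ((\<lambda>z. f (Arg z)) z - p z) < e"
    using Stone_Weierstrass_polynomial_function[OF compact_sphere cont_f_Arg[OF cont per] e] by blast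
  obtain F where F: "\<And>\<theta>. p (cis \<theta>) = trigs F \<theta>" using trig_poly[OF p(1)] unfolding trig_def by blast
  have "cmod (f \<theta> - trigs F \<theta>) < e" if th: "\<theta> \<in> {-pi..pi}" for \<theta>
  proof -
    have "cis \<theta> \<in> sphere 0 1" by simp
    then have "norm (f (Arg (cis \<theta>)) - p (cis \<theta>)) < e" using p(2) by blast
    then show ?thesis using f_cis[where f=f, OF per th] F by simp
  qed
  then show ?thesis by blast
qed

lemma fourier_add:
  assumes "continuous_on {-pi..pi} q" "continuous_on {-pi..pi} g"
  shows "fourier_coeff (\<lambda>\<theta>. q \<theta> + g \<theta>) k = fourier_coeff q k + fourier_coeff g k"
proof -
  have "integral {-pi..pi} (\<lambda>\<theta>. (q \<theta> + g \<theta>) * ex (- k) \<theta>) =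
      integral {-pi..pi} (\<lambda>\<theta>. q \<theta> * ex (- k) \<theta>) + integral {-pi..pi} (\<lambda>\<theta>. g \<theta> * ex (- k) \<theta>)"
    unfolding distrib_right
    by (rule integral_add) (auto intro!: integrable_continuous_interval continuous_intros assms)
  then show ?thesis unfolding fourier_ex by (simp add: add_divide_distrib)
qed

lemma toep_add: "toep n (\<lambda>k. a k + b k) = toep n a + toep n b"
  by (intro eq_matI) (auto simp: toep_def)

lemma occ_add: "occ n (\<lambda>k. a k + b k) x = occ n a x + occ n b x"
  unfolding occ_def add_divide_distrib[symmetric]
  by (rule arg_cong[where f="\<lambda>z. z / of_nat n"]) (simp add: algebra_simps)

lemma circ_add: "circ n (\<lambda>k. a k + b k) = circ n a + circ n b"
  by (intro eq_matI) (auto simp: circ_def occ_add)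

lemma final_regroup:
  fixes A B C D R0 E0 :: "complex mat"
  assumes "A \<in> carrier_mat n n" "B \<in> carrier_mat n n" "C \<in> carrier_mat n n" "D \<in> carrier_mat n n"
    "R0 \<in> carrier_mat n n" "E0 \<in> carrier_mat n n" "A - C = R0 + E0"
  shows "(A + B) - (C + D) = R0 + (E0 + (B - D))"
proof -
  have "(A + B) - (C + D) = (A - C) + (B - D)" using assms(1-6) by (intro eq_matI) auto
  also have "\<dots> = (R0 + E0) + (B - D)" using assms(7) by simp
  also have "\<dots> = R0 + (E0 + (B - D))" using assms(1-6) by (intro eq_matI) auto
  finally show ?thesis .
qed

theorem mainTheorem9:
  fixes f :: "real \<Rightarrow> complex"
  assumes cont: "continuous_on UNIV f"
    and periodic: "\<And>x. f (x + 2 * pi) = f x"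
  shows "\<forall>\<epsilon>>0. \<exists>N M :: nat. N > 0 \<and> M > 0 \<and>
           (\<forall>n > N. \<exists>R E. R \<in> carrier_mat n n \<and> E \<in> carrier_mat n n \<and>
              mat_cos (opt_circulant f n) - mat_cos (toeplitz_mat f n) = R + E \<and>
              mat_rank R \<le> 2 * M \<and> spectral_norm E \<le> \<epsilon>)"
proof (intro allI impI)
  fix \<epsilon> :: real assume eps: "\<epsilon> > 0"
  define I where "I = {-pi..pi}"
  have cfI: "continuous_on I f" using cont by (rule continuous_on_subset) simp
  obtain B where B0: "B > 0" and Bf: "\<And>\<theta>. \<theta> \<in> I \<Longrightarrow> cmod (f \<theta>) \<le> B"
  proof -
    have "compact (f ` I)" unfolding I_def by (rule compact_continuous_image[OF cfI[unfolded I_def] compact_Icc])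
    then have "bounded (f ` I)" by (rule compact_imp_bounded)
    then obtain B where "B > 0" "\<And>x. x \<in> f ` I \<Longrightarrow> norm x \<le> B" by (auto simp: bounded_pos)
    then show ?thesis using that by blast
  qed
  obtain K \<delta> where d0: "\<delta> > 0" and KD0: "\<forall>n X Y R E r. bnd n X B \<longrightarrow> bnd n Y B \<longrightarrow> X - Y = R + E \<longrightarrow> LR n r R \<longrightarrow> bnd n E \<delta> \<longrightarrow>
     (\<exists>R' E'. mat_cos X - mat_cos Y = R' + E' \<and> LR n (2 * K * K * r) R' \<and> bnd n E' \<epsilon>)"
    using cos_perturb[OF eps, of B] B0 by auto
  note KD = KD0[rule_format]
  have "\<delta> / 4 > 0" using d0 by simp
  from trig_approx[OF cont periodic this] obtain F where F0: "\<forall>\<theta>\<in>{-pi..pi}. cmod (f \<theta> - trigs F \<theta>) < \<delta> / 4"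
    by blast
  have F: "\<And>\<theta>. \<theta> \<in> I \<Longrightarrow> cmod (f \<theta> - trigs F \<theta>) < \<delta> / 4" using F0 unfolding I_def by blast
  define q where "q = trigs F"
  define g where "g \<theta> = f \<theta> - q \<theta>" for \<theta>
  have cq: "continuous_on I q" unfolding q_def by (rule cont_trigs)
  have cg: "continuous_on I g" unfolding g_def by (intro continuous_intros cfI cq)
  have gb: "\<And>\<theta>. \<theta> \<in> I \<Longrightarrow> cmod (g \<theta>) \<le> \<delta> / 4" using F by (simp add: g_def q_def less_imp_le)
  define M0 where "M0 = sum_list (map (\<lambda>x. nat \<bar>snd x\<bar>) F)"
  define tq where "tq = fourier_coeff q"
  define tg where "tg = fourier_coeff g"
  have tq0: "tq d = 0" if d: "\<bar>d\<bar> > int M0" for d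
  proof -
    have "\<forall>x\<in>set F. snd x \<noteq> d"
    proof
      fix x assume x: "x \<in> set F"
      have "nat \<bar>snd x\<bar> \<le> M0" unfolding M0_def using x by (intro member_le_sum_list) auto
      then show "snd x \<noteq> d" using d by auto
    qed
    then show ?thesis unfolding tq_def q_def by (rule trigs_fourier0)
  qed
  have ff: "fourier_coeff f = (\<lambda>k. tq k + tg k)"
  proof
    fix k
    have "f = (\<lambda>\<theta>. q \<theta> + g \<theta>)" by (auto simp: g_def)
    then have "fourier_coeff f k = fourier_coeff (\<lambda>\<theta>. q \<theta> + g \<theta>) k" by simp
    also have "\<dots> = tq k + tg k" unfolding tq_def tg_def
      by (rule fourier_add) (use cq cg I_def in auto)
    finally show "fourier_coeff f k = tq k + tg k" .
  qed
  define C0 where "C0 = (\<Sum>d\<in>{-int M0..int M0}. cmod (tq d) * \<bar>d\<bar>)"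
  have C00: "C0 \<ge> 0" unfolding C0_def by (intro sum_nonneg) auto
  define N where "N = 2 * M0 + nat \<lceil>2 * C0 / \<delta>\<rceil> + 1"
  define M where "M = 2 * K * K * M0 + 1"
  show "\<exists>N M :: nat. N > 0 \<and> M > 0 \<and>
           (\<forall>n > N. \<exists>R E. R \<in> carrier_mat n n \<and> E \<in> carrier_mat n n \<and>
              mat_cos (opt_circulant f n) - mat_cos (toeplitz_mat f n) = R + E \<and>
              mat_rank R \<le> 2 * M \<and> spectral_norm E \<le> \<epsilon>)"
  proof (rule exI[of _ N], rule exI[of _ M], intro conjI allI impI)
    show "N > 0" "M > 0" by (auto simp: N_def M_def)
    fix n assume nN: "n > N"
    have n0: "n > 0" and n2: "n > 2 * M0" using nN by (auto simp: N_def)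
    have "real n \<ge> 2 * C0 / \<delta>"
    proof -
      have "2 * C0 / \<delta> \<le> real (nat \<lceil>2 * C0 / \<delta>\<rceil>)" by linarith
      also have "nat \<lceil>2 * C0 / \<delta>\<rceil> \<le> n" using nN unfolding N_def by linarith
      then have "real (nat \<lceil>2 * C0 / \<delta>\<rceil>) \<le> real n" by (simp only: of_nat_le_iff)
      finally show ?thesis .
    qed
    then have "2 * C0 \<le> real n * \<delta>" using d0 by (simp add: field_simps)
    then have C0n: "C0 / real n \<le> \<delta> / 2" using n0 by (simp add: field_simps)
    define X where "X = circ n (fourier_coeff f)"
    define Y where "Y = toep n (fourier_coeff f)"
    have bY: "bnd n Y B" unfolding Y_def by (rule toep_bnd[OF cfI[unfolded I_def] Bf[unfolded I_def]])
    have bX: "bnd n X B" unfolding X_def by (rule circ_bnd[OF toep_bnd[OF cfI[unfolded I_def] Bf[unfolded I_def]] n0])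
    obtain R0 E0 where D: "circ n tq - toep n tq = R0 + E0" "LR n (2 * M0) R0"
        "bnd n E0 (\<Sum>d\<in>{-int M0..int M0}. cmod (tq d) * \<bar>d\<bar> / n)"
      using circ_toep_decomp[where t=tq and M=M0, OF tq0 n2] by blast
    have "(\<Sum>d\<in>{-int M0..int M0}. cmod (tq d) * \<bar>d\<bar> / n) = C0 / n"
      unfolding C0_def by (simp add: sum_divide_distrib)
    then have bE0: "bnd n E0 (\<delta> / 2)" using bnd_mono[OF D(3)] C0n by simp
    have bTg: "bnd n (toep n tg) (\<delta> / 4)" unfolding tg_def by (rule toep_bnd[OF cg[unfolded I_def] gb[unfolded I_def]])
    have bCg: "bnd n (circ n tg) (\<delta> / 4)" using circ_bnd[OF bTg n0] .
    have bE: "bnd n (E0 + (circ n tg - toep n tg)) \<delta>"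
      using bnd_add[OF bE0 bnd_minus[OF bCg bTg]] by simp
    have XY: "X - Y = R0 + (E0 + (circ n tg - toep n tg))"
      unfolding X_def Y_def ff circ_add toep_add
      by (rule final_regroup[OF _ _ _ _ LR_carrier[OF D(2)] bnd_carrier[OF bE0] D(1)]) (auto simp: circ_def toep_def)
    obtain R' E' where RE: "mat_cos X - mat_cos Y = R' + E'" "LR n (2 * K * K * (2 * M0)) R'" "bnd n E' \<epsilon>"
      using KD[OF bX bY XY D(2) bE] by blast
    show "\<exists>R E. R \<in> carrier_mat n n \<and> E \<in> carrier_mat n n \<and>
              mat_cos (opt_circulant f n) - mat_cos (toeplitz_mat f n) = R + E \<and>
              mat_rank R \<le> 2 * M \<and> spectral_norm E \<le> \<epsilon>"
    proof (rule exI[of _ R'], rule exI[of _ E'], intro conjI)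
      show "R' \<in> carrier_mat n n" by (rule LR_carrier[OF RE(2)])
      show "E' \<in> carrier_mat n n" by (rule bnd_carrier[OF RE(3)])
      show "mat_cos (opt_circulant f n) - mat_cos (toeplitz_mat f n) = R' + E'"
        using RE(1) by (simp add: X_def Y_def circ_eq toeplitz_eq)
      have "mat_rank R' \<le> 2 * K * K * (2 * M0)" by (rule LR_rank[OF RE(2)])
      also have "\<dots> \<le> 2 * M" by (simp add: M_def)
      finally show "mat_rank R' \<le> 2 * M" .
      show "spectral_norm E' \<le> \<epsilon>" using spectral_norm_le[OF RE(3)] eps by simp
    qed
  qed
qed

end
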